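(* Let $\lambda\in(0,1)$, $T\ge1$, $p\in\Delta(K)$, $q\in\Delta(L)$. The value $V_{\lambda,T}(p,q)$ of the $\lambda$-discounted $T$-stage game satisfies $$V_{\lambda,T}(p,q)=\max\sum_{l\in L}q^lu_{l,0;\lambda,T}$$ over $x\in X_T(p)$, reals $u_{l,0;\lambda,T}$ and real $|A|\times|B|$ matrices $u_{l,h^A,h^B;\lambda,T}$ ($l\in L$, $h^A\in A^{s-1},h^B\in B^{s-1}$, $s=1,\dots,T-1$; equal to $0$ for histories of length $T-1$), subject to $\lambda\sum_k(M^{kl})^Tx_{k,\emptyset,\emptyset}+(1-\lambda)(u_{l,\emptyset,\emptyset;\lambda,T})^T\mathbf1\ge u_{l,0;\lambda,T}\mathbf1$ for all $l$, and $\lambda\sum_k(M^{kl})^Tx_{k,(h^A,a),(h^B,b)}+(1-\lambda)(u_{l,(h^A,a),(h^B,b);\lambda,T})^T\mathbf1\ge u^{a,b}_{l,h^A,h^B;\lambda,T}\mathbf1$ for all $s=1,\dots,T-1$, $l$, $h^A\in A^{s-1},h^B\in B^{s-1}$, $a,b$. The $x$-part $x^\star$ of an optimal solution is an optimal realization plan of player 1 in $\Gamma_{\lambda,T}(p,q)$, and $u_{l,0;\lambda,T}(x^\star)=u^\star_{l,0;\lambda,T}$ for all $l$, where $u^\star_{:,0;\lambda,T}$ is the corresponding part of the optimal solution. Dually, $V_{\lambda,T}(p,q)=\min\sum_kp^kw_{k,0;\lambda,T}$ over $y\in Y_T(q)$, reals $w_{k,0;\lambda,T}$ and $|A|\times|B|$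 matrices $w_{k,h^A,h^B;\lambda,T}$ (zero for histories of length $T-1$), subject to $\lambda\sum_lM^{kl}y_{l,\emptyset,\emptyset}+(1-\lambda)w_{k,\emptyset,\emptyset;\lambda,T}\mathbf1\le w_{k,0;\lambda,T}\mathbf1$ for all $k$ and $\lambda\sum_lM^{kl}y_{l,(h^A,a),(h^B,b)}+(1-\lambda)w_{k,(h^A,a),(h^B,b);\lambda,T}\mathbf1\le w^{a,b}_{k,h^A,h^B;\lambda,T}\mathbf1$ for all $s=1,\dots,T-1$, $k$, $h^A,h^B$ of length $s-1$, $a,b$; the $y$-part $y^\star$ of an optimal solution is an optimal realization plan of player 2 and $w_{k,0;\lambda,T}(y^\star)=w^\star_{k,0;\lambda,T}$ for all $k$.
   Context: Setting: nonempty finite $K,L,A,B$; $M:K\times L\times A\times B\to\mathbb R$, $M^{kl}=(M(k,l,a,b))_{a,b}$; $p\in\Delta(K),q\in\Delta(L)$ with positive entries. Types $k\sim p$, $l\sim q$ drawn independently and told privately to players 1 and 2; at each stage actions $a_t\in A,b_t\in B$ chosen simultaneously and announced; behavior strategies $\sigma_t:K\times A^{t-1}\times B^{t-1}\to\Delta(A)$, $\tau_t:L\times A^{t-1}\times B^{t-1}\to\Delta(B)$. The $\lambda$-discounted $T$-stage game $\Gamma_{\lambda,T}(p,q)$ has payoff $\mathbb E_{p,q,\sigma,\tau}[\sum_{t=1}^T\lambda(1-\lambda)^{t-1}M(k,l,a_t,b_t)]$ to player 1 (maximizer), value $V_{\lambda,T}(p,q)$. $X_T(p)$: families $x=(x_{k,h^A,h^B})$,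 $k\in K$, $h^A\in A^{t-1},h^B\in B^{t-1}$, $t=1,\dots,T$, $x_{k,h^A,h^B}\in\mathbb R^{|A|}$, $x\ge0$, $\mathbf1^Tx_{k,\emptyset,\emptyset}=p^k$, $\mathbf1^Tx_{k,(h^A,a),(h^B,b)}=x^a_{k,h^A,h^B}$; the realization plan of $\sigma$ is $x^{a_t}_{k,h_t^A,h_t^B}=p^k\prod_{s=1}^t\sigma^{a_s}_s(k,h^A_s,h^B_s)$ (prefix histories), and $x\in X_T(p)$ determines $\sigma$ by ratios. $Y_T(q)$ symmetric with $y_{l,h^A,h^B}\in\mathbb R^{|B|}$ and $q$. An optimal realization plan is that of a security strategy. Anti-discounted weighted future security payoffs at stage 0: for $x\in X_T(p)$ with strategy $\sigma$, $u_{l,0;\lambda,T}(x)=\min_{\tau(l)}\sum_kp^k\,\mathbb E[\sum_{s=1}^T\lambda(1-\lambda)^{s-1}M(k,l,a_s,b_s)\mid k,l]$, the minimum over behavior strategies of player 2 of type $l$; for $y\in Y_T(q)$ with strategy $\tau$, $w_{k,0;\lambda,T}(y)=\max_{\sigma(k)}\sum_lq^l\,\mathbb E[\sum_{s=1}^T\lambda(1-\lambda)^{s-1}M(k,l,a_s,b_s)\mid k,l]$. *)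

theory Defs
  imports Complex_Main
begin

text \<open>Histories: a stage-t history is a pair (ha, hb) of lists of equal length t-1;
  actions are appended at the end, so (ha @ [a], hb @ [b]) is the history (h^A,a),(h^B,b).
  Behavior strategies are total functions; only their values on histories of
  length < T matter.\<close>

type_synonym ('k,'a,'b) strat1 = "'k \<Rightarrow> 'a list \<Rightarrow> 'b list \<Rightarrow> 'a \<Rightarrow> real"
type_synonym ('l,'a,'b) strat2 = "'l \<Rightarrow> 'a list \<Rightarrow> 'b list \<Rightarrow> 'b \<Rightarrow> real"

definition is_distr :: "('x::finite \<Rightarrow> real) \<Rightarrow> bool" where
  "is_distr d \<longleftrightarrow> (\<forall>x. d x \<ge> 0) \<and> (\<Sum>x\<in>UNIV. d x) = 1"

definition is_hist :: "nat \<Rightarrow> 'a list \<Rightarrow> 'b list \<Rightarrow> bool" where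
  "is_hist T ha hb \<longleftrightarrow> length ha = length hb \<and> length ha < T"

definition is_strat1 :: "nat \<Rightarrow> ('k,'a::finite,'b) strat1 \<Rightarrow> bool" where
  "is_strat1 T \<sigma> \<longleftrightarrow> (\<forall>k ha hb. is_hist T ha hb \<longrightarrow> is_distr (\<sigma> k ha hb))"

definition is_strat2 :: "nat \<Rightarrow> ('l,'a,'b::finite) strat2 \<Rightarrow> bool" where
  "is_strat2 T \<tau> \<longleftrightarrow> (\<forall>l ha hb. is_hist T ha hb \<longrightarrow> is_distr (\<tau> l ha hb))"

definition pr1 :: "('k,'a,'b) strat1 \<Rightarrow> 'k \<Rightarrow> 'a list \<Rightarrow> 'b list \<Rightarrow> real" where
  "pr1 \<sigma> k ha hb = (\<Prod>s<length ha. \<sigma> k (take s ha) (take s hb) (ha ! s))"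

definition pr2 :: "('l,'a,'b) strat2 \<Rightarrow> 'l \<Rightarrow> 'a list \<Rightarrow> 'b list \<Rightarrow> real" where
  "pr2 \<tau> l ha hb = (\<Prod>s<length hb. \<tau> l (take s ha) (take s hb) (hb ! s))"

definition cond_payoff ::
  "('k \<Rightarrow> 'l \<Rightarrow> 'a \<Rightarrow> 'b \<Rightarrow> real) \<Rightarrow> real \<Rightarrow> nat \<Rightarrow>
   ('k,'a,'b) strat1 \<Rightarrow> ('l,'a,'b) strat2 \<Rightarrow> 'k \<Rightarrow> 'l \<Rightarrow> real" where
  "cond_payoff M lam T \<sigma> \<tau> k l =
     (\<Sum>ha\<in>{ha. length ha = T}. \<Sum>hb\<in>{hb. length hb = T}.
        pr1 \<sigma> k ha hb * pr2 \<tau> l ha hb *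
        (\<Sum>s<T. lam * (1 - lam) ^ s * M k l (ha ! s) (hb ! s)))"

definition payoff ::
  "('k::finite \<Rightarrow> 'l::finite \<Rightarrow> 'a \<Rightarrow> 'b \<Rightarrow> real) \<Rightarrow> real \<Rightarrow> nat \<Rightarrow> ('k \<Rightarrow> real) \<Rightarrow> ('l \<Rightarrow> real) \<Rightarrow>
   ('k,'a,'b) strat1 \<Rightarrow> ('l,'a,'b) strat2 \<Rightarrow> real" where
  "payoff M lam T p q \<sigma> \<tau> = (\<Sum>k\<in>UNIV. \<Sum>l\<in>UNIV. p k * q l * cond_payoff M lam T \<sigma> \<tau> k l)"

definition is_value ::
  "('k::finite \<Rightarrow> 'l::finite \<Rightarrow> 'a::finite \<Rightarrow> 'b::finite \<Rightarrow> real) \<Rightarrow> real \<Rightarrow> nat \<Rightarrow>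
   ('k \<Rightarrow> real) \<Rightarrow> ('l \<Rightarrow> real) \<Rightarrow> real \<Rightarrow> bool" where
  "is_value M lam T p q v \<longleftrightarrow>
     (\<exists>\<sigma>. is_strat1 T \<sigma> \<and> (\<forall>\<tau>. is_strat2 T \<tau> \<longrightarrow> payoff M lam T p q \<sigma> \<tau> \<ge> v)) \<and>
     (\<exists>\<tau>. is_strat2 T \<tau> \<and> (\<forall>\<sigma>. is_strat1 T \<sigma> \<longrightarrow> payoff M lam T p q \<sigma> \<tau> \<le> v))"

definition game_value ::
  "('k::finite \<Rightarrow> 'l::finite \<Rightarrow> 'a::finite \<Rightarrow> 'b::finite \<Rightarrow> real) \<Rightarrow> real \<Rightarrow> nat \<Rightarrow>
   ('k \<Rightarrow> real) \<Rightarrow> ('l \<Rightarrow> real) \<Rightarrow> real" where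
  "game_value M lam T p q = (THE v. is_value M lam T p q v)"

definition security1 where
  "security1 M lam T p q \<sigma> \<longleftrightarrow> is_strat1 T \<sigma> \<and>
     (\<forall>\<tau>. is_strat2 T \<tau> \<longrightarrow> payoff M lam T p q \<sigma> \<tau> \<ge> game_value M lam T p q)"

definition security2 where
  "security2 M lam T p q \<tau> \<longleftrightarrow> is_strat2 T \<tau> \<and>
     (\<forall>\<sigma>. is_strat1 T \<sigma> \<longrightarrow> payoff M lam T p q \<sigma> \<tau> \<le> game_value M lam T p q)"

definition in_X :: "nat \<Rightarrow> ('k \<Rightarrow> real) \<Rightarrow> ('k,'a::finite,'b) strat1 \<Rightarrow> bool" where
  "in_X T p x \<longleftrightarrow>
     (\<forall>k ha hb a. is_hist T ha hb \<longrightarrow> x k ha hb a \<ge> 0) \<and>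
     (\<forall>k. (\<Sum>a\<in>UNIV. x k [] [] a) = p k) \<and>
     (\<forall>k ha hb a b. is_hist (T - 1) ha hb \<longrightarrow>
        (\<Sum>a'\<in>UNIV. x k (ha @ [a]) (hb @ [b]) a') = x k ha hb a)"

definition in_Y :: "nat \<Rightarrow> ('l \<Rightarrow> real) \<Rightarrow> ('l,'a,'b::finite) strat2 \<Rightarrow> bool" where
  "in_Y T q y \<longleftrightarrow>
     (\<forall>l ha hb b. is_hist T ha hb \<longrightarrow> y l ha hb b \<ge> 0) \<and>
     (\<forall>l. (\<Sum>b\<in>UNIV. y l [] [] b) = q l) \<and>
     (\<forall>l ha hb a b. is_hist (T - 1) ha hb \<longrightarrow>
        (\<Sum>b'\<in>UNIV. y l (ha @ [a]) (hb @ [b]) b') = y l ha hb b)"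

definition real_plan1 :: "('k \<Rightarrow> real) \<Rightarrow> ('k,'a,'b) strat1 \<Rightarrow> ('k,'a,'b) strat1" where
  "real_plan1 p \<sigma> k ha hb a = p k * pr1 \<sigma> k ha hb * \<sigma> k ha hb a"

definition real_plan2 :: "('l \<Rightarrow> real) \<Rightarrow> ('l,'a,'b) strat2 \<Rightarrow> ('l,'a,'b) strat2" where
  "real_plan2 q \<tau> l ha hb b = q l * pr2 \<tau> l ha hb * \<tau> l ha hb b"

definition strat_of_plan1 :: "('k,'a::finite,'b) strat1 \<Rightarrow> ('k,'a,'b) strat1" where
  "strat_of_plan1 x k ha hb a =
     (let d = (\<Sum>a'\<in>UNIV. x k ha hb a') in
      if d = 0 then 1 / real (card (UNIV :: 'a set)) else x k ha hb a / d)"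

definition strat_of_plan2 :: "('l,'a,'b::finite) strat2 \<Rightarrow> ('l,'a,'b) strat2" where
  "strat_of_plan2 y l ha hb b =
     (let d = (\<Sum>b'\<in>UNIV. y l ha hb b') in
      if d = 0 then 1 / real (card (UNIV :: 'b set)) else y l ha hb b / d)"

definition optimal_plan1 where
  "optimal_plan1 M lam T p q x \<longleftrightarrow> (\<exists>\<sigma>. security1 M lam T p q \<sigma> \<and>
     (\<forall>k ha hb a. is_hist T ha hb \<longrightarrow> x k ha hb a = real_plan1 p \<sigma> k ha hb a))"

definition optimal_plan2 where
  "optimal_plan2 M lam T p q y \<longleftrightarrow> (\<exists>\<tau>. security2 M lam T p q \<tau> \<and>
     (\<forall>l ha hb b. is_hist T ha hb \<longrightarrow> y l ha hb b = real_plan2 q \<tau> l ha hb b))"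

definition sec_u where
  "sec_u M lam T p x l =
     (INF \<tau>\<in>{\<tau>. is_strat2 T \<tau>}. \<Sum>k\<in>UNIV. p k * cond_payoff M lam T (strat_of_plan1 x) \<tau> k l)"

definition sec_w where
  "sec_w M lam T q y k =
     (SUP \<sigma>\<in>{\<sigma>. is_strat1 T \<sigma>}. \<Sum>l\<in>UNIV. q l * cond_payoff M lam T \<sigma> (strat_of_plan2 y) k l)"

text \<open>Primal LP (player 1). u0 l = u_{l,0}; U l ha hb a b = (u_{l,ha,hb})^{a,b}.\<close>
definition lp1_feasible ::
  "('k::finite \<Rightarrow> 'l::finite \<Rightarrow> 'a::finite \<Rightarrow> 'b::finite \<Rightarrow> real) \<Rightarrow> real \<Rightarrow> nat \<Rightarrow> ('k \<Rightarrow> real) \<Rightarrow>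
   ('k,'a,'b) strat1 \<Rightarrow> ('l \<Rightarrow> real) \<Rightarrow> ('l \<Rightarrow> 'a list \<Rightarrow> 'b list \<Rightarrow> 'a \<Rightarrow> 'b \<Rightarrow> real) \<Rightarrow> bool" where
  "lp1_feasible M lam T p x u0 U \<longleftrightarrow>
     in_X T p x \<and>
     (\<forall>l ha hb a b. length ha = T - 1 \<and> length hb = T - 1 \<longrightarrow> U l ha hb a b = 0) \<and>
     (\<forall>l b'. lam * (\<Sum>k\<in>UNIV. \<Sum>a'\<in>UNIV. M k l a' b' * x k [] [] a')
             + (1 - lam) * (\<Sum>a'\<in>UNIV. U l [] [] a' b') \<ge> u0 l) \<and>
     (\<forall>l ha hb a b b'. is_hist (T - 1) ha hb \<longrightarrow>
        lam * (\<Sum>k\<in>UNIV. \<Sum>a'\<in>UNIV. M k l a' b' * x k (ha @ [a]) (hb @ [b]) a')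
        + (1 - lam) * (\<Sum>a'\<in>UNIV. U l (ha @ [a]) (hb @ [b]) a' b') \<ge> U l ha hb a b)"

definition lp1_optimal where
  "lp1_optimal M lam T p q x u0 U \<longleftrightarrow> lp1_feasible M lam T p x u0 U \<and>
     (\<forall>x' u0' U'. lp1_feasible M lam T p x' u0' U' \<longrightarrow>
        (\<Sum>l\<in>UNIV. q l * u0' l) \<le> (\<Sum>l\<in>UNIV. q l * u0 l))"

text \<open>Dual LP (player 2). w0 k = w_{k,0}; W k ha hb a b = (w_{k,ha,hb})^{a,b}.\<close>
definition lp2_feasible ::
  "('k::finite \<Rightarrow> 'l::finite \<Rightarrow> 'a::finite \<Rightarrow> 'b::finite \<Rightarrow> real) \<Rightarrow> real \<Rightarrow> nat \<Rightarrow> ('l \<Rightarrow> real) \<Rightarrow>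
   ('l,'a,'b) strat2 \<Rightarrow> ('k \<Rightarrow> real) \<Rightarrow> ('k \<Rightarrow> 'a list \<Rightarrow> 'b list \<Rightarrow> 'a \<Rightarrow> 'b \<Rightarrow> real) \<Rightarrow> bool" where
  "lp2_feasible M lam T q y w0 W \<longleftrightarrow>
     in_Y T q y \<and>
     (\<forall>k ha hb a b. length ha = T - 1 \<and> length hb = T - 1 \<longrightarrow> W k ha hb a b = 0) \<and>
     (\<forall>k a'. lam * (\<Sum>l\<in>UNIV. \<Sum>b'\<in>UNIV. M k l a' b' * y l [] [] b')
             + (1 - lam) * (\<Sum>b'\<in>UNIV. W k [] [] a' b') \<le> w0 k) \<and>
     (\<forall>k ha hb a b a'. is_hist (T - 1) ha hb \<longrightarrow>
        lam * (\<Sum>l\<in>UNIV. \<Sum>b'\<in>UNIV. M k l a' b' * y l (ha @ [a]) (hb @ [b]) b')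
        + (1 - lam) * (\<Sum>b'\<in>UNIV. W k (ha @ [a]) (hb @ [b]) a' b') \<le> W k ha hb a b)"

definition lp2_optimal where
  "lp2_optimal M lam T p q y w0 W \<longleftrightarrow> lp2_feasible M lam T q y w0 W \<and>
     (\<forall>y' w0' W'. lp2_feasible M lam T q y' w0' W' \<longrightarrow>
        (\<Sum>k\<in>UNIV. p k * w0 k) \<le> (\<Sum>k\<in>UNIV. p k * w0' k))"

end

theory Submission
  imports Defs
begin

definition dotI :: "'i set \<Rightarrow> ('i \<Rightarrow> real) \<Rightarrow> ('i \<Rightarrow> real) \<Rightarrow> real" where
  "dotI I a x = (\<Sum>i\<in>I. a i * x i)"

definition fm_comb :: "'i \<Rightarrow> ('i \<Rightarrow> real) \<times> real \<Rightarrow> ('i \<Rightarrow> real) \<times> real \<Rightarrow> ('i \<Rightarrow> real) \<times> real" where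
  "fm_comb i0 r s = ((\<lambda>i. (- fst s i0) * fst r i + fst r i0 * fst s i), (- fst s i0) * snd r + fst r i0 * snd s)"

lemma dotI_insert_upd:
  assumes "finite I" "i0 \<notin> I"
  shows "dotI (insert i0 I) a (x(i0 := t)) = dotI I a x + a i0 * t"
proof -
  have "(\<Sum>i\<in>I. a i * (x(i0 := t)) i) = (\<Sum>i\<in>I. a i * x i)"
    by (rule sum.cong) (use assms in auto)
  then show ?thesis using assms by (simp add: dotI_def)
qed

lemma sum_ind:
  assumes "finite R" "r \<in> R"
  shows "(\<Sum>r'\<in>R. (if r' = r then 1 else 0) * (F r' :: real)) = F r"
proof -
  have "(\<Sum>r'\<in>R. (if r' = r then 1 else 0) * F r') = (\<Sum>r'\<in>R. if r' = r then F r' else 0)"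
    by (rule sum.cong) auto
  then show ?thesis using assms by (simp add: sum.delta')
qed

lemma farkas_set:
  assumes "finite I"
  shows "finite R \<Longrightarrow> \<not> (\<exists>x. \<forall>r\<in>R. dotI I (fst r) x \<le> snd r) \<Longrightarrow>
    \<exists>\<mu>. (\<forall>r\<in>R. 0 \<le> \<mu> r) \<and> (\<forall>i\<in>I. (\<Sum>r\<in>R. \<mu> r * fst r i) = 0) \<and> (\<Sum>r\<in>R. \<mu> r * snd r) < 0"
  using assms
proof (induction I arbitrary: R rule: finite_induct)
  case empty
  then obtain r where r: "r \<in> R" "snd r < 0"
    by (auto simp: dotI_def not_le)
  show ?case
    by (rule exI[of _ "\<lambda>r'. if r' = r then 1 else 0"])
       (use r empty in \<open>auto simp: sum_ind\<close>)
next
  case (insert i0 I)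
  define P where "P = {r\<in>R. fst r i0 > 0}"
  define N where "N = {r\<in>R. fst r i0 < 0}"
  define Z where "Z = {r\<in>R. fst r i0 = 0}"
  define R' where "R' = Z \<union> (\<lambda>(r,s). fm_comb i0 r s) ` (P \<times> N)"
  have finR': "finite R'" unfolding R'_def P_def N_def Z_def using insert by auto
  have noR': "\<not> (\<exists>x. \<forall>r\<in>R'. dotI I (fst r) x \<le> snd r)"
  proof
    assume "\<exists>x. \<forall>r\<in>R'. dotI I (fst r) x \<le> snd r"
    then obtain x where x: "\<forall>r\<in>R'. dotI I (fst r) x \<le> snd r" by blast
    define up where "up r = (snd r - dotI I (fst r) x) / fst r i0" for r
    define t where "t = (if N = {} then (if P = {} then 0 else Min (up ` P)) else Max (up ` N))"
    have finP: "finite P" "finite N" using insert unfolding P_def N_def by auto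
    have lu: "up s \<le> up r" if "s \<in> N" "r \<in> P" for r s
    proof -
      have "fm_comb i0 r s \<in> R'" unfolding R'_def using that by auto
      then have c: "dotI I (fst (fm_comb i0 r s)) x \<le> snd (fm_comb i0 r s)" using x by blast
      have "dotI I (fst (fm_comb i0 r s)) x = (- fst s i0) * dotI I (fst r) x + fst r i0 * dotI I (fst s) x"
        by (simp add: fm_comb_def dotI_def sum.distrib sum_distrib_left algebra_simps sum_subtractf sum_negf)
      with c have c2: "(- fst s i0) * dotI I (fst r) x + fst r i0 * dotI I (fst s) x
          \<le> (- fst s i0) * snd r + fst r i0 * snd s" by (simp add: fm_comb_def)
      have sn: "fst s i0 < 0" and rp: "fst r i0 > 0" using that unfolding N_def P_def by auto
      have "fst r i0 * (snd s - dotI I (fst s) x) \<ge> (- fst s i0) * (- (snd r - dotI I (fst r) x))"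
        using c2 by (simp add: algebra_simps)
      then show ?thesis unfolding up_def using sn rp
        by (simp add: divide_simps algebra_simps)
    qed
    have tP: "t \<le> up r" if "r \<in> P" for r
    proof (cases "N = {}")
      case True
      then show ?thesis using that finP unfolding t_def by auto
    next
      case False
      then show ?thesis using that finP lu unfolding t_def by (auto simp: Max_le_iff)
    qed
    have tN: "up s \<le> t" if "s \<in> N" for s
      using that finP unfolding t_def by auto
    have "\<forall>r\<in>R. dotI (insert i0 I) (fst r) (x(i0 := t)) \<le> snd r"
    proof
      fix r assume r: "r \<in> R"
      have eq: "dotI (insert i0 I) (fst r) (x(i0 := t)) = dotI I (fst r) x + fst r i0 * t"
        using insert by (simp add: dotI_insert_upd)
      consider "fst r i0 = 0" | "fst r i0 > 0" | "fst r i0 < 0" by linarith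
      then show "dotI (insert i0 I) (fst r) (x(i0 := t)) \<le> snd r"
      proof cases
        case 1
        then have "r \<in> R'" unfolding R'_def Z_def using r by auto
        then show ?thesis using x 1 eq by auto
      next
        case 2
        then have "t \<le> up r" using tP r unfolding P_def by auto
        then show ?thesis using 2 eq unfolding up_def by (simp add: divide_simps algebra_simps mult.commute)
      next
        case 3
        then have "up r \<le> t" using tN r unfolding N_def by auto
        then show ?thesis using 3 eq unfolding up_def by (simp add: divide_simps algebra_simps mult.commute)
      qed
    qed
    then show False using insert.prems by blast
  qed
  obtain \<mu>' where mu': "\<forall>r\<in>R'. 0 \<le> \<mu>' r" "\<forall>i\<in>I. (\<Sum>r\<in>R'. \<mu>' r * fst r i) = 0"
      "(\<Sum>r\<in>R'. \<mu>' r * snd r) < 0"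
    using insert.IH[OF finR' noR'] by blast
  have rep: "\<exists>c. (\<forall>r\<in>R. 0 \<le> c r) \<and> (\<forall>i. fst r' i = (\<Sum>r\<in>R. c r * fst r i)) \<and> snd r' = (\<Sum>r\<in>R. c r * snd r)"
    if r'R: "r' \<in> R'" for r'
  proof -
    consider "r' \<in> Z" | r s where "r \<in> P" "s \<in> N" "r' = fm_comb i0 r s"
      using r'R unfolding R'_def by auto
    then show ?thesis
    proof cases
      case 1
      then have "r' \<in> R" unfolding Z_def by auto
      then show ?thesis
        by (intro exI[of _ "\<lambda>r. if r = r' then 1 else 0"])
           (use insert in \<open>auto simp: sum_ind\<close>)
    next
      case 2
      then have rs: "r \<in> R" "s \<in> R" "r \<noteq> s" "fst r i0 > 0" "fst s i0 < 0"
        unfolding P_def N_def by auto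
      define c where "c = (\<lambda>r''. (if r'' = r then - fst s i0 else 0) + (if r'' = s then fst r i0 else 0))"
      have sf: "(\<Sum>r''\<in>R. c r'' * F r'') = (- fst s i0) * F r + fst r i0 * F s" for F :: "_ \<Rightarrow> real"
      proof -
        have "(\<Sum>r''\<in>R. c r'' * F r'') = (\<Sum>r''\<in>R. (if r'' = r then (- fst s i0) * F r'' else 0) + (if r'' = s then fst r i0 * F r'' else 0))"
          by (rule sum.cong) (auto simp: c_def)
        also have "\<dots> = (- fst s i0) * F r + fst r i0 * F s"
          using rs insert.prems(1) by (simp add: sum.distrib sum.delta')
        finally show ?thesis .
      qed
      have cnn: "\<forall>r\<in>R. 0 \<le> c r" using rs by (auto simp: c_def)
      show ?thesis
        by (intro exI[of _ c] conjI allI ballI cnn)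
           (use rs 2 in \<open>auto simp: sf[of "\<lambda>r. fst r _"] sf[of snd] fm_comb_def\<close>)
    qed
  qed
  define c where "c r' = (SOME c. (\<forall>r\<in>R. 0 \<le> c r) \<and> (\<forall>i. fst r' i = (\<Sum>r\<in>R. c r * fst r i)) \<and> snd r' = (\<Sum>r\<in>R. c r * snd r))" for r'
  have c: "(\<forall>r\<in>R. 0 \<le> c r' r) \<and> (\<forall>i. fst r' i = (\<Sum>r\<in>R. c r' r * fst r i)) \<and> snd r' = (\<Sum>r\<in>R. c r' r * snd r)"
    if "r' \<in> R'" for r'
    unfolding c_def using someI_ex[OF rep[OF that]] .
  define \<mu> where "\<mu> r = (\<Sum>r'\<in>R'. \<mu>' r' * c r' r)" for r
  have key: "(\<Sum>r\<in>R. \<mu> r * F r) = (\<Sum>r'\<in>R'. \<mu>' r' * (\<Sum>r\<in>R. c r' r * F r))" for F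
    unfolding \<mu>_def by (simp add: sum_distrib_left sum_distrib_right sum.swap[of _ R] mult.assoc)
  have R'0: "fst r' i0 = 0" if "r' \<in> R'" for r'
    using that unfolding R'_def Z_def by (auto simp: fm_comb_def)
  show ?case
  proof (intro exI[of _ \<mu>] conjI ballI)
    fix r assume "r \<in> R" then show "0 \<le> \<mu> r"
      unfolding \<mu>_def using mu'(1) c by (auto intro!: sum_nonneg)
  next
    fix i assume "i \<in> insert i0 I"
    have "(\<Sum>r\<in>R. \<mu> r * fst r i) = (\<Sum>r'\<in>R'. \<mu>' r' * fst r' i)"
      unfolding key by (rule sum.cong) (use c in auto)
    also have "\<dots> = 0"
    proof (cases "i = i0")
      case True then show ?thesis using R'0 by simp
    next
      case False then show ?thesis using mu'(2) \<open>i \<in> insert i0 I\<close> by auto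
    qed
    finally show "(\<Sum>r\<in>R. \<mu> r * fst r i) = 0" .
  next
    have "(\<Sum>r\<in>R. \<mu> r * snd r) = (\<Sum>r'\<in>R'. \<mu>' r' * snd r')"
      unfolding key by (rule sum.cong) (use c in auto)
    then show "(\<Sum>r\<in>R. \<mu> r * snd r) < 0" using mu'(3) by simp
  qed
qed

lemma farkas_named:
  fixes A :: "'r \<Rightarrow> 'i \<Rightarrow> real" and b :: "'r \<Rightarrow> real"
  assumes "finite I" "finite Rn" "\<not> (\<exists>x. \<forall>r\<in>Rn. (\<Sum>i\<in>I. A r i * x i) \<le> b r)"
  shows "\<exists>\<mu>. (\<forall>r\<in>Rn. 0 \<le> \<mu> r) \<and> (\<forall>i\<in>I. (\<Sum>r\<in>Rn. \<mu> r * A r i) = 0) \<and> (\<Sum>r\<in>Rn. \<mu> r * b r) < 0"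
proof -
  define g where "g r = (A r, b r)" for r
  define R where "R = g ` Rn"
  have "\<not> (\<exists>x. \<forall>r\<in>R. dotI I (fst r) x \<le> snd r)"
    using assms(3) unfolding R_def g_def dotI_def by auto
  then obtain \<mu>0 where m0: "\<forall>r\<in>R. 0 \<le> \<mu>0 r" "\<forall>i\<in>I. (\<Sum>r\<in>R. \<mu>0 r * fst r i) = 0"
    "(\<Sum>r\<in>R. \<mu>0 r * snd r) < 0"
    using farkas_set[OF assms(1)] assms(2) unfolding R_def by blast
  define cn where "cn r = real (card {r'\<in>Rn. g r' = g r})" for r
  define \<mu> where "\<mu> r = \<mu>0 (g r) / cn r" for r
  have cnpos: "cn r > 0" if "r \<in> Rn" for r
    unfolding cn_def using that assms(2) by (auto simp: card_gt_0_iff)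
  have key: "(\<Sum>r\<in>Rn. \<mu> r * F (g r)) = (\<Sum>y\<in>R. \<mu>0 y * F y)" for F :: "_ \<Rightarrow> real"
  proof -
    have "(\<Sum>r\<in>Rn. \<mu> r * F (g r)) = (\<Sum>y\<in>R. \<Sum>r\<in>{r\<in>Rn. g r = y}. \<mu> r * F (g r))"
      unfolding R_def by (rule sum.image_gen[OF assms(2)])
    also have "\<dots> = (\<Sum>y\<in>R. \<mu>0 y * F y)"
    proof (rule sum.cong[OF refl])
      fix y assume "y \<in> R"
      then obtain r0 where r0: "r0 \<in> Rn" "g r0 = y" unfolding R_def by auto
      have "(\<Sum>r\<in>{r\<in>Rn. g r = y}. \<mu> r * F (g r)) = (\<Sum>r\<in>{r\<in>Rn. g r = y}. \<mu>0 y / cn r0 * F y)"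
        by (rule sum.cong) (auto simp: \<mu>_def cn_def r0(2)[symmetric])
      also have "\<dots> = cn r0 * (\<mu>0 y / cn r0 * F y)"
        by (simp add: cn_def r0(2))
      also have "\<dots> = \<mu>0 y * F y" using cnpos[OF r0(1)] by simp
      finally show "(\<Sum>r\<in>{r\<in>Rn. g r = y}. \<mu> r * F (g r)) = \<mu>0 y * F y" .
    qed
    finally show ?thesis .
  qed
  show ?thesis
  proof (intro exI[of _ \<mu>] conjI ballI)
    fix r assume "r \<in> Rn" then show "0 \<le> \<mu> r"
      using m0(1) cnpos[of r] unfolding \<mu>_def R_def by (auto intro!: divide_nonneg_pos)
  next
    fix i assume "i \<in> I"
    show "(\<Sum>r\<in>Rn. \<mu> r * A r i) = 0"
      using key[of "\<lambda>y. fst y i"] m0(2) \<open>i \<in> I\<close> by (simp add: g_def)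
  next
    show "(\<Sum>r\<in>Rn. \<mu> r * b r) < 0"
      using key[of snd] m0(3) by (simp add: g_def)
  qed
qed

datatype ('i,'j,'rx,'ry) gvar = VX 'i | VMu 'ry | VY 'j | VNu 'rx
datatype ('i,'j,'rx,'ry) grow = R1 'rx | R2 'ry | R3p 'j | R3m 'j | R4 'ry | R5 'rx | R6p 'i | R6m 'i | R7

fun gA :: "('rx \<Rightarrow> 'i \<Rightarrow> real) \<Rightarrow> ('rx \<Rightarrow> real) \<Rightarrow> ('ry \<Rightarrow> 'j \<Rightarrow> real) \<Rightarrow> ('ry \<Rightarrow> real) \<Rightarrow>
   ('i \<Rightarrow> 'j \<Rightarrow> real) \<Rightarrow> ('i,'j,'rx,'ry) grow \<Rightarrow> ('i,'j,'rx,'ry) gvar \<Rightarrow> real" where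
  "gA G g H h C (R1 r) (VX i) = G r i"
| "gA G g H h C (R2 r) (VMu r') = (if r' = r then -1 else 0)"
| "gA G g H h C (R3p j) (VMu r) = H r j"
| "gA G g H h C (R3p j) (VX i) = C i j"
| "gA G g H h C (R3m j) (VMu r) = - H r j"
| "gA G g H h C (R3m j) (VX i) = - C i j"
| "gA G g H h C (R4 r) (VY j) = H r j"
| "gA G g H h C (R5 r) (VNu r') = (if r' = r then -1 else 0)"
| "gA G g H h C (R6p i) (VNu r) = G r i"
| "gA G g H h C (R6p i) (VY j) = - C i j"
| "gA G g H h C (R6m i) (VNu r) = - G r i"
| "gA G g H h C (R6m i) (VY j) = C i j"
| "gA G g H h C R7 (VNu r) = g r"
| "gA G g H h C R7 (VMu r) = h r"
| "gA G g H h C _ _ = 0"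

fun gb :: "('rx \<Rightarrow> real) \<Rightarrow> ('ry \<Rightarrow> real) \<Rightarrow> ('i,'j,'rx,'ry) grow \<Rightarrow> real" where
  "gb g h (R1 r) = g r"
| "gb g h (R4 r) = h r"
| "gb g h _ = 0"

lemma sum_gvar:
  assumes "finite I" "finite J" "finite RX" "finite RY"
  shows "(\<Sum>v\<in>VX ` I \<union> VMu ` RY \<union> VY ` J \<union> VNu ` RX. F v) =
    (\<Sum>i\<in>I. F (VX i)) + (\<Sum>r\<in>RY. F (VMu r)) + (\<Sum>j\<in>J. F (VY j)) + (\<Sum>r\<in>RX. F (VNu r))"
proof -
  have d: "(VX ` I \<union> VMu ` RY \<union> VY ` J) \<inter> VNu ` RX = {}" "(VX ` I \<union> VMu ` RY) \<inter> VY ` J = {}"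
    "VX ` I \<inter> VMu ` RY = {}" by auto
  show ?thesis
    using assms
    by (simp add: sum.union_disjoint[OF _ _ d(1)] sum.union_disjoint[OF _ _ d(2)]
        sum.union_disjoint[OF _ _ d(3)] sum.reindex inj_on_def)
qed

lemma sum_grow:
  assumes "finite I" "finite J" "finite RX" "finite RY"
  shows "(\<Sum>v\<in>insert R7 (R1 ` RX \<union> R2 ` RY \<union> R3p ` J \<union> R3m ` J \<union> R4 ` RY \<union> R5 ` RX \<union> R6p ` I \<union> R6m ` I). F v) =
    F R7 + ((\<Sum>r\<in>RX. F (R1 r)) + (\<Sum>r\<in>RY. F (R2 r)) + (\<Sum>j\<in>J. F (R3p j)) + (\<Sum>j\<in>J. F (R3m j))
    + (\<Sum>r\<in>RY. F (R4 r)) + (\<Sum>r\<in>RX. F (R5 r)) + (\<Sum>i\<in>I. F (R6p i)) + (\<Sum>i\<in>I. F (R6m i)))"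
proof -
  have d: "R7 \<notin> (R1 ` RX \<union> R2 ` RY \<union> R3p ` J \<union> R3m ` J \<union> R4 ` RY \<union> R5 ` RX \<union> R6p ` I \<union> R6m ` I)"
    "(R1 ` RX \<union> R2 ` RY \<union> R3p ` J \<union> R3m ` J \<union> R4 ` RY \<union> R5 ` RX \<union> R6p ` I) \<inter> R6m ` I = {}"
    "(R1 ` RX \<union> R2 ` RY \<union> R3p ` J \<union> R3m ` J \<union> R4 ` RY \<union> R5 ` RX) \<inter> R6p ` I = {}"
    "(R1 ` RX \<union> R2 ` RY \<union> R3p ` J \<union> R3m ` J \<union> R4 ` RY) \<inter> R5 ` RX = {}"
    "(R1 ` RX \<union> R2 ` RY \<union> R3p ` J \<union> R3m ` J) \<inter> R4 ` RY = {}"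
    "(R1 ` RX \<union> R2 ` RY \<union> R3p ` J) \<inter> R3m ` J = {}"
    "(R1 ` RX \<union> R2 ` RY) \<inter> R3p ` J = {}"
    "R1 ` RX \<inter> R2 ` RY = {}" by auto
  show ?thesis
    using assms
    by (simp add: sum.insert[OF _ d(1)] sum.union_disjoint[OF _ _ d(2)]
        sum.union_disjoint[OF _ _ d(3)] sum.union_disjoint[OF _ _ d(4)] sum.union_disjoint[OF _ _ d(5)]
        sum.union_disjoint[OF _ _ d(6)] sum.union_disjoint[OF _ _ d(7)] sum.union_disjoint[OF _ _ d(8)]
        sum.reindex inj_on_def)
qed

definition polyh :: "'i set \<Rightarrow> 'r set \<Rightarrow> ('r \<Rightarrow> 'i \<Rightarrow> real) \<Rightarrow> ('r \<Rightarrow> real) \<Rightarrow> ('i \<Rightarrow> real) \<Rightarrow> bool" where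
  "polyh I R A b x \<longleftrightarrow> (\<forall>r\<in>R. (\<Sum>i\<in>I. A r i * x i) \<le> b r)"

definition bil :: "'i set \<Rightarrow> 'j set \<Rightarrow> ('i \<Rightarrow> 'j \<Rightarrow> real) \<Rightarrow> ('i \<Rightarrow> real) \<Rightarrow> ('j \<Rightarrow> real) \<Rightarrow> real" where
  "bil I J C x y = (\<Sum>i\<in>I. \<Sum>j\<in>J. x i * C i j * y j)"

lemma bil_alt1: "bil I J C x y = (\<Sum>i\<in>I. x i * (\<Sum>j\<in>J. C i j * y j))"
  unfolding bil_def by (simp add: sum_distrib_left mult.assoc)

lemma bil_alt2: "bil I J C x y = (\<Sum>j\<in>J. y j * (\<Sum>i\<in>I. x i * C i j))"
  unfolding bil_def by (subst sum.swap) (simp add: sum_distrib_left mult.commute mult.left_commute)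

lemma polyh_weak:
  assumes "polyh I R A b x" "\<forall>r\<in>R. 0 \<le> \<nu> r"
  shows "(\<Sum>i\<in>I. x i * (\<Sum>r\<in>R. \<nu> r * A r i)) \<le> (\<Sum>r\<in>R. \<nu> r * b r)"
proof -
  have "(\<Sum>i\<in>I. x i * (\<Sum>r\<in>R. \<nu> r * A r i)) = (\<Sum>r\<in>R. \<nu> r * (\<Sum>i\<in>I. A r i * x i))"
    by (simp add: sum_distrib_left sum.swap[of _ I] mult.commute mult.left_commute)
  also have "\<dots> \<le> (\<Sum>r\<in>R. \<nu> r * b r)"
    using assms unfolding polyh_def by (intro sum_mono mult_left_mono) auto
  finally show ?thesis .
qed

lemma sum_ind_c: "finite R \<Longrightarrow> r \<in> R \<Longrightarrow> (\<Sum>r'\<in>R. (if r' = r then c else 0) * (F r' :: real)) = c * F r"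
  by (simp add: if_distrib[of "\<lambda>u. u * _"] sum.delta' cong: if_cong)

lemma sum_ind_c2: "finite R \<Longrightarrow> r \<in> R \<Longrightarrow> (\<Sum>r'\<in>R. (F r' :: real) * (if r = r' then c else 0)) = F r * c"
  by (simp add: if_distrib[of "\<lambda>u. _ * u"] sum.delta cong: if_cong)

lemma bil_add2: "bil I J C x (\<lambda>j. y j + t * d j) = bil I J C x y + t * bil I J C x d"
  unfolding bil_def by (simp add: algebra_simps sum.distrib sum_distrib_left)

lemma bil_add1: "bil I J C (\<lambda>i. x i + t * d i) y = bil I J C x y + t * bil I J C d y"
  unfolding bil_def by (simp add: algebra_simps sum.distrib sum_distrib_left)

lemma bil_scale2: "bil I J C x (\<lambda>j. c * y j) = c * bil I J C x y"
  unfolding bil_def by (simp add: algebra_simps sum_distrib_left)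

lemma bil_scale1: "bil I J C (\<lambda>i. c * x i) y = c * bil I J C x y"
  unfolding bil_def by (simp add: algebra_simps sum_distrib_left)

lemma gm:
  fixes G :: "'rx \<Rightarrow> 'i \<Rightarrow> real" and g :: "'rx \<Rightarrow> real" and H :: "'ry \<Rightarrow> 'j \<Rightarrow> real"
    and h :: "'ry \<Rightarrow> real" and C :: "'i \<Rightarrow> 'j \<Rightarrow> real"
  assumes fin: "finite I" "finite J" "finite RX" "finite RY"
    and Xne: "polyh I RX G g x0" and Yne: "polyh J RY H h y0"
    and bnd: "\<And>x y. polyh I RX G g x \<Longrightarrow> polyh J RY H h y \<Longrightarrow> \<bar>bil I J C x y\<bar> \<le> B"
  shows "\<exists>x y v. polyh I RX G g x \<and> polyh J RY H h y \<and>
     (\<forall>y'. polyh J RY H h y' \<longrightarrow> v \<le> bil I J C x y') \<and>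
     (\<forall>x'. polyh I RX G g x' \<longrightarrow> bil I J C x' y \<le> v)"
proof -
  define A where "A = gA G g H h C"
  define b :: "('i,'j,'rx,'ry) grow \<Rightarrow> real" where "b = gb g h"
  define IV where "IV = VX ` I \<union> VMu ` RY \<union> VY ` J \<union> VNu ` RX"
  define Rn where "Rn = insert R7 (R1 ` RX \<union> R2 ` RY \<union> R3p ` J \<union> R3m ` J \<union> R4 ` RY \<union> R5 ` RX \<union> R6p ` I \<union> R6m ` I)"
  have finIV: "finite IV" "finite Rn" using fin by (auto simp: IV_def Rn_def)
  have sIV: "(\<Sum>v\<in>IV. F v) = (\<Sum>i\<in>I. F (VX i)) + (\<Sum>r\<in>RY. F (VMu r)) + (\<Sum>j\<in>J. F (VY j)) + (\<Sum>r\<in>RX. F (VNu r))"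
    for F :: "_ \<Rightarrow> real" unfolding IV_def by (rule sum_gvar[OF fin])
  have sRn: "(\<Sum>v\<in>Rn. F v) = F R7 + ((\<Sum>r\<in>RX. F (R1 r)) + (\<Sum>r\<in>RY. F (R2 r)) + (\<Sum>j\<in>J. F (R3p j)) + (\<Sum>j\<in>J. F (R3m j))
    + (\<Sum>r\<in>RY. F (R4 r)) + (\<Sum>r\<in>RX. F (R5 r)) + (\<Sum>i\<in>I. F (R6p i)) + (\<Sum>i\<in>I. F (R6m i)))"
    for F :: "_ \<Rightarrow> real" unfolding Rn_def by (rule sum_grow[OF fin])
  show ?thesis
  proof (cases "\<exists>z. \<forall>\<rho>\<in>Rn. (\<Sum>v\<in>IV. A \<rho> v * z v) \<le> b \<rho>")
    case True
    then obtain z where z: "\<And>\<rho>. \<rho> \<in> Rn \<Longrightarrow> (\<Sum>v\<in>IV. A \<rho> v * z v) \<le> b \<rho>" by blast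
    define x where "x i = z (VX i)" for i
    define \<mu> where "\<mu> r = z (VMu r)" for r
    define y where "y j = z (VY j)" for j
    define \<nu> where "\<nu> r = z (VNu r)" for r
    have c1: "polyh I RX G g x" unfolding polyh_def
    proof
      fix r assume r: "r \<in> RX"
      then show "(\<Sum>i\<in>I. G r i * x i) \<le> g r"
        using z[of "R1 r"] by (simp add: Rn_def sIV A_def b_def x_def)
    qed
    have c4: "polyh J RY H h y" unfolding polyh_def
    proof
      fix r assume r: "r \<in> RY"
      then show "(\<Sum>j\<in>J. H r j * y j) \<le> h r"
        using z[of "R4 r"] by (simp add: Rn_def sIV A_def b_def y_def)
    qed
    have c2: "0 \<le> \<mu> r" if r: "r \<in> RY" for r
      using z[of "R2 r"] r fin by (simp add: Rn_def sIV A_def b_def \<mu>_def sum_ind_c)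
    have c5: "0 \<le> \<nu> r" if r: "r \<in> RX" for r
      using z[of "R5 r"] r fin by (simp add: Rn_def sIV A_def b_def \<nu>_def sum_ind_c)
    have c3: "(\<Sum>i\<in>I. x i * C i j) = - (\<Sum>r\<in>RY. \<mu> r * H r j)" if j: "j \<in> J" for j
    proof -
      have "(\<Sum>i\<in>I. C i j * x i) + (\<Sum>r\<in>RY. H r j * \<mu> r) \<le> 0"
        using z[of "R3p j"] j by (simp add: Rn_def sIV A_def b_def \<mu>_def x_def)
      moreover have "- (\<Sum>i\<in>I. C i j * x i) - (\<Sum>r\<in>RY. H r j * \<mu> r) \<le> 0"
        using z[of "R3m j"] j by (simp add: Rn_def sIV A_def b_def \<mu>_def x_def sum_negf)
      ultimately show ?thesis by (simp add: mult.commute)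
    qed
    have c6: "(\<Sum>j\<in>J. C i j * y j) = (\<Sum>r\<in>RX. \<nu> r * G r i)" if i: "i \<in> I" for i
    proof -
      have "(\<Sum>r\<in>RX. G r i * \<nu> r) - (\<Sum>j\<in>J. C i j * y j) \<le> 0"
        using z[of "R6p i"] i by (simp add: Rn_def sIV A_def b_def \<nu>_def y_def sum_negf)
      moreover have "- (\<Sum>r\<in>RX. G r i * \<nu> r) + (\<Sum>j\<in>J. C i j * y j) \<le> 0"
        using z[of "R6m i"] i by (simp add: Rn_def sIV A_def b_def \<nu>_def y_def sum_negf)
      ultimately show ?thesis by (simp add: mult.commute)
    qed
    have c7: "(\<Sum>r\<in>RX. \<nu> r * g r) + (\<Sum>r\<in>RY. \<mu> r * h r) \<le> 0"
      using z[of R7] by (simp add: Rn_def sIV A_def b_def \<nu>_def \<mu>_def mult.commute)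
    define v where "v = (\<Sum>r\<in>RX. \<nu> r * g r)"
    show ?thesis
    proof (intro exI conjI allI impI)
      show "polyh I RX G g x" by (rule c1)
      show "polyh J RY H h y" by (rule c4)
    next
      fix x' assume x': "polyh I RX G g x'"
      have "bil I J C x' y = (\<Sum>i\<in>I. x' i * (\<Sum>r\<in>RX. \<nu> r * G r i))"
        unfolding bil_alt1 by (rule sum.cong) (simp_all add: c6)
      also have "\<dots> \<le> v" unfolding v_def by (rule polyh_weak[OF x']) (use c5 in auto)
      finally show "bil I J C x' y \<le> v" .
    next
      fix y' assume y': "polyh J RY H h y'"
      have "bil I J C x y' = - (\<Sum>j\<in>J. y' j * (\<Sum>r\<in>RY. \<mu> r * H r j))"
        unfolding bil_alt2 by (simp add: c3 sum_negf)
      moreover have "(\<Sum>j\<in>J. y' j * (\<Sum>r\<in>RY. \<mu> r * H r j)) \<le> (\<Sum>r\<in>RY. \<mu> r * h r)"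
        by (rule polyh_weak[OF y']) (use c2 in auto)
      ultimately show "v \<le> bil I J C x y'" using c7 unfolding v_def by linarith
    qed
  next
    case False
    then obtain \<mu> where mu: "\<And>\<rho>. \<rho> \<in> Rn \<Longrightarrow> 0 \<le> \<mu> \<rho>" "\<And>v. v \<in> IV \<Longrightarrow> (\<Sum>\<rho>\<in>Rn. \<mu> \<rho> * A \<rho> v) = 0"
      "(\<Sum>\<rho>\<in>Rn. \<mu> \<rho> * b \<rho>) < 0"
      using farkas_named[OF finIV(1) finIV(2), of A b] by blast
    define \<alpha> where "\<alpha> r = \<mu> (R1 r)" for r
    define \<kappa> where "\<kappa> r = \<mu> (R4 r)" for r
    define gg where "gg j = \<mu> (R3m j) - \<mu> (R3p j)" for j
    define e where "e i = \<mu> (R6m i) - \<mu> (R6p i)" for i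
    define \<theta> where "\<theta> = \<mu> R7"
    have th0: "0 \<le> \<theta>" unfolding \<theta>_def using mu(1) by (simp add: Rn_def)
    have al0: "\<forall>r\<in>RX. 0 \<le> \<alpha> r" unfolding \<alpha>_def using mu(1) by (simp add: Rn_def)
    have ka0: "\<forall>r\<in>RY. 0 \<le> \<kappa> r" unfolding \<kappa>_def using mu(1) by (simp add: Rn_def)
    have ea: "(\<Sum>j\<in>J. H r j * gg j) \<le> \<theta> * h r" if r: "r \<in> RY" for r
    proof -
      have "\<mu> R7 * h r + (- \<mu> (R2 r) + (\<Sum>j\<in>J. \<mu> (R3p j) * H r j) - (\<Sum>j\<in>J. \<mu> (R3m j) * H r j)) = 0"
        using mu(2)[of "VMu r"] r fin by (simp add: IV_def sRn A_def sum_ind_c2 sum_negf)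
      moreover have "0 \<le> \<mu> (R2 r)" using mu(1) r by (simp add: Rn_def)
      moreover have "(\<Sum>j\<in>J. H r j * gg j) = (\<Sum>j\<in>J. \<mu> (R3m j) * H r j) - (\<Sum>j\<in>J. \<mu> (R3p j) * H r j)"
        unfolding gg_def by (simp add: algebra_simps sum_subtractf)
      ultimately show ?thesis unfolding \<theta>_def by linarith
    qed
    have eb: "(\<Sum>i\<in>I. G r i * e i) \<le> \<theta> * g r" if r: "r \<in> RX" for r
    proof -
      have "\<mu> R7 * g r + (- \<mu> (R5 r) + (\<Sum>i\<in>I. \<mu> (R6p i) * G r i) - (\<Sum>i\<in>I. \<mu> (R6m i) * G r i)) = 0"
        using mu(2)[of "VNu r"] r fin by (simp add: IV_def sRn A_def sum_ind_c2 sum_negf)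
      moreover have "0 \<le> \<mu> (R5 r)" using mu(1) r by (simp add: Rn_def)
      moreover have "(\<Sum>i\<in>I. G r i * e i) = (\<Sum>i\<in>I. \<mu> (R6m i) * G r i) - (\<Sum>i\<in>I. \<mu> (R6p i) * G r i)"
        unfolding e_def by (simp add: algebra_simps sum_subtractf)
      ultimately show ?thesis unfolding \<theta>_def by linarith
    qed
    have ec: "(\<Sum>r\<in>RX. \<alpha> r * G r i) = (\<Sum>j\<in>J. C i j * gg j)" if i: "i \<in> I" for i
    proof -
      have "(\<Sum>r\<in>RX. \<mu> (R1 r) * G r i) + (\<Sum>j\<in>J. \<mu> (R3p j) * C i j) - (\<Sum>j\<in>J. \<mu> (R3m j) * C i j) = 0"
        using mu(2)[of "VX i"] i fin by (simp add: IV_def sRn A_def sum_negf)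
      moreover have "(\<Sum>j\<in>J. C i j * gg j) = (\<Sum>j\<in>J. \<mu> (R3m j) * C i j) - (\<Sum>j\<in>J. \<mu> (R3p j) * C i j)"
        unfolding gg_def by (simp add: algebra_simps sum_subtractf)
      ultimately show ?thesis unfolding \<alpha>_def by linarith
    qed
    have ed: "(\<Sum>r\<in>RY. \<kappa> r * H r j) = - (\<Sum>i\<in>I. e i * C i j)" if j: "j \<in> J" for j
    proof -
      have "(\<Sum>r\<in>RY. \<mu> (R4 r) * H r j) - (\<Sum>i\<in>I. \<mu> (R6p i) * C i j) + (\<Sum>i\<in>I. \<mu> (R6m i) * C i j) = 0"
        using mu(2)[of "VY j"] j fin by (simp add: IV_def sRn A_def sum_negf)
      moreover have "(\<Sum>i\<in>I. e i * C i j) = (\<Sum>i\<in>I. \<mu> (R6m i) * C i j) - (\<Sum>i\<in>I. \<mu> (R6p i) * C i j)"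
        unfolding e_def by (simp add: algebra_simps sum_subtractf)
      ultimately show ?thesis unfolding \<kappa>_def by linarith
    qed
    have ee: "(\<Sum>r\<in>RX. \<alpha> r * g r) + (\<Sum>r\<in>RY. \<kappa> r * h r) < 0"
      using mu(3) by (simp add: sRn b_def \<alpha>_def \<kappa>_def)
    have star: "bil I J C x gg - bil I J C e y < 0" if x: "polyh I RX G g x" and y: "polyh J RY H h y" for x y
    proof -
      have "bil I J C x gg = (\<Sum>i\<in>I. x i * (\<Sum>r\<in>RX. \<alpha> r * G r i))"
        unfolding bil_alt1 by (rule sum.cong) (simp_all add: ec)
      also have "\<dots> \<le> (\<Sum>r\<in>RX. \<alpha> r * g r)" by (rule polyh_weak[OF x al0])
      finally have 1: "bil I J C x gg \<le> (\<Sum>r\<in>RX. \<alpha> r * g r)" .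
      have "- bil I J C e y = (\<Sum>j\<in>J. y j * (\<Sum>r\<in>RY. \<kappa> r * H r j))"
        unfolding bil_alt2 by (simp add: ed sum_negf)
      also have "\<dots> \<le> (\<Sum>r\<in>RY. \<kappa> r * h r)" by (rule polyh_weak[OF y ka0])
      finally have 2: "- bil I J C e y \<le> (\<Sum>r\<in>RY. \<kappa> r * h r)" .
      show ?thesis using 1 2 ee by linarith
    qed
    show ?thesis
    proof (cases "\<theta> > 0")
      case True
      define xh where "xh i = (1 / \<theta>) * e i" for i
      define yh where "yh j = (1 / \<theta>) * gg j" for j
      have xh: "polyh I RX G g xh" unfolding polyh_def
      proof
        fix r assume r: "r \<in> RX"
        have "(\<Sum>i\<in>I. G r i * xh i) = (1 / \<theta>) * (\<Sum>i\<in>I. G r i * e i)"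
          unfolding xh_def by (simp add: sum_distrib_left algebra_simps)
        also have "\<dots> \<le> (1 / \<theta>) * (\<theta> * g r)" using eb[OF r] True by (intro mult_left_mono) auto
        finally show "(\<Sum>i\<in>I. G r i * xh i) \<le> g r" using True by simp
      qed
      have yh: "polyh J RY H h yh" unfolding polyh_def
      proof
        fix r assume r: "r \<in> RY"
        have "(\<Sum>j\<in>J. H r j * yh j) = (1 / \<theta>) * (\<Sum>j\<in>J. H r j * gg j)"
          unfolding yh_def by (simp add: sum_distrib_left algebra_simps)
        also have "\<dots> \<le> (1 / \<theta>) * (\<theta> * h r)" using ea[OF r] True by (intro mult_left_mono) auto
        finally show "(\<Sum>j\<in>J. H r j * yh j) \<le> h r" using True by simp
      qed
      have "gg = (\<lambda>j. \<theta> * yh j)" using True by (auto simp: yh_def)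
      then have 1: "bil I J C xh gg = \<theta> * bil I J C xh yh" by (simp add: bil_scale2)
      have "e = (\<lambda>i. \<theta> * xh i)" using True by (auto simp: xh_def)
      then have 2: "bil I J C e yh = \<theta> * bil I J C xh yh" by (simp add: bil_scale1)
      show ?thesis using star[OF xh yh] 1 2 by simp
    next
      case False
      then have th: "\<theta> = 0" using th0 by simp
      have yt: "polyh J RY H h (\<lambda>j. y0 j + t * gg j)" if t: "t \<ge> 0" for t
        unfolding polyh_def
      proof
        fix r assume r: "r \<in> RY"
        have "(\<Sum>j\<in>J. H r j * (y0 j + t * gg j)) = (\<Sum>j\<in>J. H r j * y0 j) + t * (\<Sum>j\<in>J. H r j * gg j)"
          by (simp add: algebra_simps sum.distrib sum_distrib_left)
        moreover have "t * (\<Sum>j\<in>J. H r j * gg j) \<le> 0" using ea[OF r] th t by (simp add: mult_nonneg_nonpos)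
        moreover have "(\<Sum>j\<in>J. H r j * y0 j) \<le> h r" using Yne r unfolding polyh_def by auto
        ultimately show "(\<Sum>j\<in>J. H r j * (y0 j + t * gg j)) \<le> h r" by linarith
      qed
      have xt: "polyh I RX G g (\<lambda>i. x0 i + t * e i)" if t: "t \<ge> 0" for t
        unfolding polyh_def
      proof
        fix r assume r: "r \<in> RX"
        have "(\<Sum>i\<in>I. G r i * (x0 i + t * e i)) = (\<Sum>i\<in>I. G r i * x0 i) + t * (\<Sum>i\<in>I. G r i * e i)"
          by (simp add: algebra_simps sum.distrib sum_distrib_left)
        moreover have "t * (\<Sum>i\<in>I. G r i * e i) \<le> 0" using eb[OF r] th t by (simp add: mult_nonneg_nonpos)
        moreover have "(\<Sum>i\<in>I. G r i * x0 i) \<le> g r" using Xne r unfolding polyh_def by auto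
        ultimately show "(\<Sum>i\<in>I. G r i * (x0 i + t * e i)) \<le> g r" by linarith
      qed
      have s0: "bil I J C x0 gg < bil I J C e y0" using star[OF Xne Yne] by simp
      define m where "m = B + 1 + \<bar>bil I J C x0 y0\<bar>"
      show ?thesis
      proof (cases "bil I J C x0 gg < 0")
        case True
        define t where "t = m / (- bil I J C x0 gg)"
        have t0: "t \<ge> 0" unfolding t_def m_def using True bnd[OF Xne Yne]
          by (intro divide_nonneg_pos) auto
        have "bil I J C x0 (\<lambda>j. y0 j + t * gg j) = bil I J C x0 y0 - m"
          using True unfolding bil_add2 t_def by (simp add: field_simps)
        then have "\<bar>bil I J C x0 (\<lambda>j. y0 j + t * gg j)\<bar> > B" unfolding m_def by linarith
        then show ?thesis using bnd[OF Xne yt[OF t0]] by linarith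
      next
        case False
        then have pos: "bil I J C e y0 > 0" using s0 by linarith
        define t where "t = m / bil I J C e y0"
        have t0: "t \<ge> 0" unfolding t_def m_def using pos bnd[OF Xne Yne]
          by (intro divide_nonneg_pos) auto
        have "bil I J C (\<lambda>i. x0 i + t * e i) y0 = bil I J C x0 y0 + m"
          using pos unfolding bil_add1 t_def by (simp add: field_simps)
        then have "\<bar>bil I J C (\<lambda>i. x0 i + t * e i) y0\<bar> > B" unfolding m_def by linarith
        then show ?thesis using bnd[OF xt[OF t0] Yne] by linarith
      qed
    qed
  qed
qed

lemma finite_len[simp]: "finite {xs::'a::finite list. length xs = n}"
  using finite_lists_length_eq[of "UNIV::'a set" n] by simp

lemma sum_len_0: "(\<Sum>xs\<in>{xs::'a list. length xs = 0}. F xs) = F []"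
  by simp

lemma sum_len_Suc:
  "(\<Sum>xs\<in>{xs::'a::finite list. length xs = Suc n}. F xs) = (\<Sum>xs\<in>{xs. length xs = n}. \<Sum>a\<in>UNIV. F (xs @ [a]))"
proof -
  have img: "{xs::'a list. length xs = Suc n} = (\<lambda>(xs,a). xs @ [a]) ` ({xs. length xs = n} \<times> UNIV)"
  proof (rule set_eqI, rule iffI)
    fix ys :: "'a list" assume "ys \<in> {xs. length xs = Suc n}"
    then have "ys \<noteq> []" "length (butlast ys) = n" by auto
    then have "ys = butlast ys @ [last ys]" by simp
    then show "ys \<in> (\<lambda>(xs,a). xs @ [a]) ` ({xs. length xs = n} \<times> UNIV)"
      using \<open>length (butlast ys) = n\<close> by (auto intro!: image_eqI[of _ _ "(butlast ys, last ys)"])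
  qed auto
  have inj: "inj_on (\<lambda>(xs,a). xs @ [a]) ({xs::'a list. length xs = n} \<times> UNIV)"
    by (auto simp: inj_on_def)
  show ?thesis
    unfolding img sum.reindex[OF inj] by (simp add: sum.cartesian_product case_prod_unfold)
qed

lemma pr1_snoc:
  assumes "length h = length h'"
  shows "pr1 \<sigma> k (h @ [a]) (h' @ [b]) = pr1 \<sigma> k h h' * \<sigma> k h h' a"
proof -
  have "pr1 \<sigma> k (h @ [a]) (h' @ [b]) = (\<Prod>s<Suc (length h). \<sigma> k (take s (h @ [a])) (take s (h' @ [b])) ((h @ [a]) ! s))"
    by (simp add: pr1_def)
  also have "\<dots> = (\<Prod>s<length h. \<sigma> k (take s (h @ [a])) (take s (h' @ [b])) ((h @ [a]) ! s)) * \<sigma> k h h' a"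
    using assms by (simp add: nth_append)
  also have "(\<Prod>s<length h. \<sigma> k (take s (h @ [a])) (take s (h' @ [b])) ((h @ [a]) ! s)) = pr1 \<sigma> k h h'"
    unfolding pr1_def by (rule prod.cong) (use assms in \<open>auto simp: nth_append\<close>)
  finally show ?thesis .
qed

lemma pr2_snoc:
  assumes "length h = length h'"
  shows "pr2 \<tau> l (h @ [a]) (h' @ [b]) = pr2 \<tau> l h h' * \<tau> l h h' b"
proof -
  have "pr2 \<tau> l (h @ [a]) (h' @ [b]) = (\<Prod>s<Suc (length h'). \<tau> l (take s (h @ [a])) (take s (h' @ [b])) ((h' @ [b]) ! s))"
    by (simp add: pr2_def)
  also have "\<dots> = (\<Prod>s<length h'. \<tau> l (take s (h @ [a])) (take s (h' @ [b])) ((h' @ [b]) ! s)) * \<tau> l h h' b"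
    using assms by (simp add: nth_append)
  also have "(\<Prod>s<length h'. \<tau> l (take s (h @ [a])) (take s (h' @ [b])) ((h' @ [b]) ! s)) = pr2 \<tau> l h h'"
    unfolding pr2_def by (rule prod.cong) (use assms in \<open>auto simp: nth_append\<close>)
  finally show ?thesis .
qed

lemma pr1_nil[simp]: "pr1 \<sigma> k [] [] = 1" by (simp add: pr1_def)
lemma pr2_nil[simp]: "pr2 \<tau> l [] [] = 1" by (simp add: pr2_def)

lemma distr_sum: "is_distr d \<Longrightarrow> (\<Sum>x\<in>UNIV. d x) = 1" by (simp add: is_distr_def)
lemma distr_nn: "is_distr d \<Longrightarrow> 0 \<le> d x" by (simp add: is_distr_def)

lemma sum2_prod: "(\<Sum>a\<in>A. \<Sum>b\<in>B. (X::real) * (f a * g b)) = X * ((\<Sum>a\<in>A. f a) * (\<Sum>b\<in>B. g b))"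
proof -
  have "X * ((\<Sum>a\<in>A. f a) * (\<Sum>b\<in>B. g b)) = X * (\<Sum>a\<in>A. \<Sum>b\<in>B. f a * g b)"
    by (simp only: sum_product)
  then show ?thesis by (simp add: sum_distrib_left)
qed

lemma marg:
  fixes \<sigma> :: "('k,'a::finite,'b::finite) strat1" and \<tau> :: "('l,'a,'b) strat2"
  assumes s: "is_strat1 T \<sigma>" and t: "is_strat2 T \<tau>" and mn: "m \<le> n" and nT: "n \<le> T"
  shows "(\<Sum>ha\<in>{ha. length ha = n}. \<Sum>hb\<in>{hb. length hb = n}. pr1 \<sigma> k ha hb * pr2 \<tau> l ha hb * F (take m ha) (take m hb))
       = (\<Sum>ha\<in>{ha. length ha = m}. \<Sum>hb\<in>{hb. length hb = m}. pr1 \<sigma> k ha hb * pr2 \<tau> l ha hb * F ha hb)"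
  using mn nT
proof (induction n rule: dec_induct)
  case base
  show ?case by (intro sum.cong) auto
next
  case (step n)
  have "(\<Sum>ha\<in>{ha. length ha = Suc n}. \<Sum>hb\<in>{hb. length hb = Suc n}. pr1 \<sigma> k ha hb * pr2 \<tau> l ha hb * F (take m ha) (take m hb))
    = (\<Sum>ha\<in>{ha. length ha = n}. \<Sum>a\<in>UNIV. \<Sum>hb\<in>{hb. length hb = n}. \<Sum>b\<in>UNIV.
         pr1 \<sigma> k ha hb * pr2 \<tau> l ha hb * F (take m ha) (take m hb) * (\<sigma> k ha hb a * \<tau> l ha hb b))"
    unfolding sum_len_Suc
    by (intro sum.cong refl) (use step.hyps in \<open>simp add: pr1_snoc pr2_snoc\<close>)
  also have "\<dots> = (\<Sum>ha\<in>{ha. length ha = n}. \<Sum>hb\<in>{hb. length hb = n}.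
         pr1 \<sigma> k ha hb * pr2 \<tau> l ha hb * F (take m ha) (take m hb) * ((\<Sum>a\<in>UNIV. \<sigma> k ha hb a) * (\<Sum>b\<in>UNIV. \<tau> l ha hb b)))"
  proof (intro sum.cong refl)
    fix ha :: "'a list"
    show "(\<Sum>a\<in>UNIV. \<Sum>hb\<in>{hb. length hb = n}. \<Sum>b\<in>UNIV.
         pr1 \<sigma> k ha hb * pr2 \<tau> l ha hb * F (take m ha) (take m hb) * (\<sigma> k ha hb a * \<tau> l ha hb b)) =
      (\<Sum>hb\<in>{hb. length hb = n}.
         pr1 \<sigma> k ha hb * pr2 \<tau> l ha hb * F (take m ha) (take m hb) * ((\<Sum>a\<in>UNIV. \<sigma> k ha hb a) * (\<Sum>b\<in>UNIV. \<tau> l ha hb b)))"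
    proof -
      have "(\<Sum>a\<in>UNIV. \<Sum>hb\<in>{hb. length hb = n}. \<Sum>b\<in>UNIV.
         pr1 \<sigma> k ha hb * pr2 \<tau> l ha hb * F (take m ha) (take m hb) * (\<sigma> k ha hb a * \<tau> l ha hb b)) =
        (\<Sum>hb\<in>{hb. length hb = n}. \<Sum>a\<in>UNIV. \<Sum>b\<in>UNIV.
         pr1 \<sigma> k ha hb * pr2 \<tau> l ha hb * F (take m ha) (take m hb) * (\<sigma> k ha hb a * \<tau> l ha hb b))"
        by (rule sum.swap)
      also have "\<dots> = (\<Sum>hb\<in>{hb. length hb = n}.
         pr1 \<sigma> k ha hb * pr2 \<tau> l ha hb * F (take m ha) (take m hb) * ((\<Sum>a\<in>UNIV. \<sigma> k ha hb a) * (\<Sum>b\<in>UNIV. \<tau> l ha hb b)))"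
        by (intro sum.cong refl) (rule sum2_prod)
      finally show ?thesis .
    qed
  qed
  also have "\<dots> = (\<Sum>ha\<in>{ha. length ha = n}. \<Sum>hb\<in>{hb. length hb = n}.
         pr1 \<sigma> k ha hb * pr2 \<tau> l ha hb * F (take m ha) (take m hb))"
  proof (intro sum.cong refl)
    fix ha hb assume "ha \<in> {ha :: 'a list. length ha = n}" "hb \<in> {hb :: 'b list. length hb = n}"
    then have "is_hist T ha hb" using step.prems by (simp add: is_hist_def)
    then show "pr1 \<sigma> k ha hb * pr2 \<tau> l ha hb * F (take m ha) (take m hb) * ((\<Sum>a\<in>UNIV. \<sigma> k ha hb a) * (\<Sum>b\<in>UNIV. \<tau> l ha hb b))
      = pr1 \<sigma> k ha hb * pr2 \<tau> l ha hb * F (take m ha) (take m hb)"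
      using s t by (simp add: is_strat1_def is_strat2_def distr_sum)
  qed
  also have "\<dots> = (\<Sum>ha\<in>{ha. length ha = m}. \<Sum>hb\<in>{hb. length hb = m}. pr1 \<sigma> k ha hb * pr2 \<tau> l ha hb * F ha hb)"
    using step by simp
  finally show ?case .
qed

definition rp1 :: "('k,'a,'b) strat1 \<Rightarrow> 'k \<Rightarrow> 'a list \<Rightarrow> 'b list \<Rightarrow> 'a \<Rightarrow> real" where
  "rp1 \<sigma> k h h' a = pr1 \<sigma> k h h' * \<sigma> k h h' a"
definition rp2 :: "('l,'a,'b) strat2 \<Rightarrow> 'l \<Rightarrow> 'a list \<Rightarrow> 'b list \<Rightarrow> 'b \<Rightarrow> real" where
  "rp2 \<tau> l h h' b = pr2 \<tau> l h h' * \<tau> l h h' b"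

lemma cond_payoff_plan:
  fixes \<sigma> :: "('k,'a::finite,'b::finite) strat1" and \<tau> :: "('l,'a,'b) strat2"
  assumes s: "is_strat1 T \<sigma>" and t: "is_strat2 T \<tau>"
  shows "cond_payoff M lam T \<sigma> \<tau> k l = (\<Sum>s<T. lam * (1 - lam) ^ s *
     (\<Sum>h\<in>{h. length h = s}. \<Sum>h'\<in>{h'. length h' = s}. \<Sum>a\<in>UNIV. \<Sum>b\<in>UNIV.
        M k l a b * rp1 \<sigma> k h h' a * rp2 \<tau> l h h' b))"
proof -
  have "cond_payoff M lam T \<sigma> \<tau> k l = (\<Sum>ha\<in>{ha. length ha = T}. \<Sum>hb\<in>{hb. length hb = T}. \<Sum>s<T.
      lam * (1 - lam) ^ s * (pr1 \<sigma> k ha hb * pr2 \<tau> l ha hb * M k l (ha ! s) (hb ! s)))"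
    unfolding cond_payoff_def by (simp add: sum_distrib_left mult.commute mult.left_commute)
  also have "\<dots> = (\<Sum>s<T. lam * (1 - lam) ^ s * (\<Sum>ha\<in>{ha. length ha = T}. \<Sum>hb\<in>{hb. length hb = T}.
      pr1 \<sigma> k ha hb * pr2 \<tau> l ha hb * M k l (ha ! s) (hb ! s)))"
    by (simp add: sum.swap[of _ "{..<T}"] sum_distrib_left)
  also have "\<dots> = (\<Sum>s<T. lam * (1 - lam) ^ s *
     (\<Sum>h\<in>{h. length h = s}. \<Sum>h'\<in>{h'. length h' = s}. \<Sum>a\<in>UNIV. \<Sum>b\<in>UNIV.
        M k l a b * rp1 \<sigma> k h h' a * rp2 \<tau> l h h' b))"
  proof (intro sum.cong refl)
    fix s assume sT: "s \<in> {..<T}"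
    have "(\<Sum>ha\<in>{ha. length ha = T}. \<Sum>hb\<in>{hb. length hb = T}.
      pr1 \<sigma> k ha hb * pr2 \<tau> l ha hb * M k l (ha ! s) (hb ! s)) =
      (\<Sum>ha\<in>{ha. length ha = T}. \<Sum>hb\<in>{hb. length hb = T}.
      pr1 \<sigma> k ha hb * pr2 \<tau> l ha hb * (\<lambda>g g'. M k l (g ! s) (g' ! s)) (take (Suc s) ha) (take (Suc s) hb))"
      by (intro sum.cong refl) (use sT in auto)
    also have "\<dots> = (\<Sum>ha\<in>{ha. length ha = Suc s}. \<Sum>hb\<in>{hb. length hb = Suc s}.
      pr1 \<sigma> k ha hb * pr2 \<tau> l ha hb * M k l (ha ! s) (hb ! s))"
      by (rule marg[OF s t]) (use sT in auto)
    also have "\<dots> = (\<Sum>h\<in>{h. length h = s}. \<Sum>a\<in>UNIV. \<Sum>h'\<in>{h'. length h' = s}. \<Sum>b\<in>UNIV.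
        M k l a b * rp1 \<sigma> k h h' a * rp2 \<tau> l h h' b)"
      unfolding sum_len_Suc
      by (intro sum.cong refl) (simp add: pr1_snoc pr2_snoc rp1_def rp2_def nth_append)
    also have "\<dots> = (\<Sum>h\<in>{h. length h = s}. \<Sum>h'\<in>{h'. length h' = s}. \<Sum>a\<in>UNIV. \<Sum>b\<in>UNIV.
        M k l a b * rp1 \<sigma> k h h' a * rp2 \<tau> l h h' b)"
      by (intro sum.cong refl) (rule sum.swap)
    finally show "lam * (1 - lam) ^ s * (\<Sum>ha\<in>{ha. length ha = T}. \<Sum>hb\<in>{hb. length hb = T}.
      pr1 \<sigma> k ha hb * pr2 \<tau> l ha hb * M k l (ha ! s) (hb ! s)) = lam * (1 - lam) ^ s * (\<Sum>h\<in>{h. length h = s}. \<Sum>h'\<in>{h'. length h' = s}. \<Sum>a\<in>UNIV. \<Sum>b\<in>UNIV.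
        M k l a b * rp1 \<sigma> k h h' a * rp2 \<tau> l h h' b)" by simp
  qed
  finally show ?thesis .
qed

lemma pr1_nn:
  assumes s: "is_strat1 T \<sigma>" and h: "is_hist T h h'"
  shows "0 \<le> pr1 \<sigma> k h h'"
proof -
  have "\<forall>s<length h. is_hist T (take s h) (take s h')" using h by (auto simp: is_hist_def)
  then show ?thesis unfolding pr1_def using s
    by (intro prod_nonneg) (auto simp: is_strat1_def is_distr_def)
qed

lemma strat_plan1:
  fixes \<sigma> :: "('k,'a::finite,'b) strat1"
  assumes s: "is_strat1 T \<sigma>" and p: "\<forall>k. 0 \<le> p k" and T: "0 < T"
  shows "in_X T p (real_plan1 p \<sigma>)"
  unfolding in_X_def
proof (intro conjI allI impI)
  fix k and ha :: "'a list" and hb :: "'b list" and a assume h: "is_hist T ha hb"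
  then show "0 \<le> real_plan1 p \<sigma> k ha hb a"
    using s p pr1_nn[OF s h] unfolding real_plan1_def is_strat1_def is_distr_def by simp
next
  fix k
  have "is_hist T ([]::'a list) ([]::'b list)" using T by (simp add: is_hist_def)
  then have "is_distr (\<sigma> k [] [])" using s by (simp add: is_strat1_def)
  then show "(\<Sum>a\<in>UNIV. real_plan1 p \<sigma> k [] [] a) = p k"
    unfolding real_plan1_def is_distr_def by (simp add: sum_distrib_left[symmetric])
next
  fix k and ha :: "'a list" and hb :: "'b list" and a b assume h: "is_hist (T - 1) ha hb"
  then have h1: "is_hist T (ha @ [a]) (hb @ [b])" and hl: "length ha = length hb"
    by (auto simp: is_hist_def)
  show "(\<Sum>a'\<in>UNIV. real_plan1 p \<sigma> k (ha @ [a]) (hb @ [b]) a') = real_plan1 p \<sigma> k ha hb a"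
    using s h1 unfolding real_plan1_def is_strat1_def is_distr_def
    by (simp add: sum_distrib_left[symmetric] pr1_snoc[OF hl] mult.assoc)
qed

lemma sop1_elem:
  fixes x :: "('k,'a::finite,'b) strat1"
  assumes nn: "\<forall>a. 0 \<le> x k h h' a"
  shows "x k h h' a = (\<Sum>a'\<in>UNIV. x k h h' a') * strat_of_plan1 x k h h' a"
proof (cases "(\<Sum>a'\<in>UNIV. x k h h' a') = 0")
  case True
  then have "x k h h' a = 0" using nn by (simp add: sum_nonneg_eq_0_iff)
  then show ?thesis using True by simp
next
  case False
  then show ?thesis by (simp add: strat_of_plan1_def Let_def)
qed

lemma sop1_strat:
  fixes x :: "('k,'a::finite,'b) strat1"
  assumes x: "in_X T p x"
  shows "is_strat1 T (strat_of_plan1 x)"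
  unfolding is_strat1_def
proof (intro allI impI)
  fix k and ha :: "'a list" and hb :: "'b list" assume h: "is_hist T ha hb"
  have nn: "\<forall>a. 0 \<le> x k ha hb a" using x h by (simp add: in_X_def)
  then have d: "0 \<le> (\<Sum>a'\<in>UNIV. x k ha hb a')" by (simp add: sum_nonneg)
  have 1: "\<forall>a. 0 \<le> strat_of_plan1 x k ha hb a"
    using nn d by (simp add: strat_of_plan1_def Let_def)
  have 2: "(\<Sum>a\<in>UNIV. strat_of_plan1 x k ha hb a) = 1"
  proof (cases "(\<Sum>a'\<in>UNIV. x k ha hb a') = 0")
    case True then show ?thesis by (simp add: strat_of_plan1_def Let_def)
  next
    case False then show ?thesis by (simp add: strat_of_plan1_def Let_def sum_divide_distrib[symmetric])
  qed
  show "is_distr (strat_of_plan1 x k ha hb)" using 1 2 by (simp add: is_distr_def)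
qed

lemma sop1_sum:
  fixes x :: "('k,'a::finite,'b) strat1"
  assumes x: "in_X T p x"
  shows "length h = n \<Longrightarrow> is_hist T h h' \<Longrightarrow> (\<Sum>a\<in>UNIV. x k h h' a) = p k * pr1 (strat_of_plan1 x) k h h'"
proof (induction n arbitrary: h h')
  case 0
  then show ?case using x by (simp add: in_X_def is_hist_def)
next
  case (Suc n)
  then have "h \<noteq> []" "h' \<noteq> []" by (auto simp: is_hist_def)
  define g where "g = butlast h"
  define g' where "g' = butlast h'"
  have hg: "h = g @ [last h]" "h' = g' @ [last h']" using \<open>h \<noteq> []\<close> \<open>h' \<noteq> []\<close> by (simp_all add: g_def g'_def)
  have lg: "length g = n" "length g' = n" using Suc.prems by (auto simp: g_def g'_def is_hist_def)
  have hg1: "is_hist (T - 1) g g'" using Suc.prems lg hg by (auto simp: is_hist_def)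
  have hgT: "is_hist T g g'" using hg1 by (auto simp: is_hist_def)
  have "(\<Sum>a\<in>UNIV. x k (g @ [last h]) (g' @ [last h']) a) = x k g g' (last h)"
    using x hg1 unfolding in_X_def by blast
  then have "(\<Sum>a\<in>UNIV. x k h h' a) = x k g g' (last h)"
    using hg by simp
  also have "\<dots> = (\<Sum>a'\<in>UNIV. x k g g' a') * strat_of_plan1 x k g g' (last h)"
    by (rule sop1_elem) (use x hgT in \<open>simp add: in_X_def\<close>)
  also have "\<dots> = p k * pr1 (strat_of_plan1 x) k g g' * strat_of_plan1 x k g g' (last h)"
    using Suc.IH[OF lg(1) hgT] by simp
  also have "\<dots> = p k * pr1 (strat_of_plan1 x) k h h'"
  proof -
    have "pr1 (strat_of_plan1 x) k (g @ [last h]) (g' @ [last h']) = pr1 (strat_of_plan1 x) k g g' * strat_of_plan1 x k g g' (last h)"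
      by (rule pr1_snoc) (simp add: lg)
    then show ?thesis using hg by (metis mult.assoc)
  qed
  finally show ?case .
qed

lemma sop1_plan:
  fixes x :: "('k,'a::finite,'b) strat1"
  assumes x: "in_X T p x" and h: "is_hist T h h'"
  shows "real_plan1 p (strat_of_plan1 x) k h h' a = x k h h' a"
proof -
  have "x k h h' a = (\<Sum>a'\<in>UNIV. x k h h' a') * strat_of_plan1 x k h h' a"
    by (rule sop1_elem) (use x h in \<open>simp add: in_X_def\<close>)
  also have "\<dots> = p k * pr1 (strat_of_plan1 x) k h h' * strat_of_plan1 x k h h' a"
    using sop1_sum[OF x refl h] by simp
  finally show ?thesis by (simp add: real_plan1_def)
qed

definition swp :: "('k \<Rightarrow> 'x \<Rightarrow> 'y \<Rightarrow> 'c \<Rightarrow> 'r) \<Rightarrow> 'k \<Rightarrow> 'y \<Rightarrow> 'x \<Rightarrow> 'c \<Rightarrow> 'r" where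
  "swp f k y x c = f k x y c"

lemma swp_swp[simp]: "swp (swp f) = f" by (simp add: swp_def fun_eq_iff)
lemma swp_app[simp]: "swp f k y x c = f k x y c" by (simp add: swp_def)

lemma pr1_swp[simp]: "pr1 (swp \<tau>) l hb ha = pr2 \<tau> l ha hb"
  by (simp add: pr1_def pr2_def)
lemma pr2_swp[simp]: "pr2 (swp \<sigma>) k hb ha = pr1 \<sigma> k ha hb"
  by (simp add: pr1_def pr2_def)
lemma is_hist_sym: "is_hist T hb ha = is_hist T ha hb" by (auto simp: is_hist_def)

lemma swp_part[simp]: "swp f k y x = f k x y" by (simp add: fun_eq_iff)

lemma is_strat1_swp[simp]: "is_strat1 T (swp \<tau>) = is_strat2 T \<tau>"
  unfolding is_strat1_def is_strat2_def by (auto simp: is_hist_def)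
lemma is_strat2_swp[simp]: "is_strat2 T (swp \<sigma>) = is_strat1 T \<sigma>"
  unfolding is_strat1_def is_strat2_def by (auto simp: is_hist_def)

lemma in_X_swp[simp]: "in_X T q (swp y) = in_Y T q y"
  unfolding in_X_def in_Y_def by (auto simp: is_hist_def)
lemma in_Y_swp[simp]: "in_Y T p (swp x) = in_X T p x"
  unfolding in_X_def in_Y_def by (auto simp: is_hist_def)

lemma sop1_swp: "strat_of_plan1 (swp y) = swp (strat_of_plan2 y)"
  by (simp add: fun_eq_iff strat_of_plan1_def strat_of_plan2_def)
lemma sop2_swp: "strat_of_plan2 (swp x) = swp (strat_of_plan1 x)"
  by (simp add: fun_eq_iff strat_of_plan1_def strat_of_plan2_def)
lemma rp1_swp: "real_plan1 q (swp \<tau>) = swp (real_plan2 q \<tau>)"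
  by (simp add: fun_eq_iff real_plan1_def real_plan2_def)
lemma rp2_swp: "real_plan2 p (swp \<sigma>) = swp (real_plan1 p \<sigma>)"
  by (simp add: fun_eq_iff real_plan1_def real_plan2_def)

definition negM :: "('k \<Rightarrow> 'l \<Rightarrow> 'a \<Rightarrow> 'b \<Rightarrow> real) \<Rightarrow> 'l \<Rightarrow> 'k \<Rightarrow> 'b \<Rightarrow> 'a \<Rightarrow> real" where
  "negM M l k b a = - M k l a b"

lemma negM_negM[simp]: "negM (negM M) = M" by (simp add: negM_def fun_eq_iff)

lemma cond_payoff_swp:
  "cond_payoff (negM M) lam T (swp \<tau>) (swp \<sigma>) l k = - cond_payoff M lam T \<sigma> \<tau> k l"
  unfolding cond_payoff_def
  by (subst sum.swap) (simp add: negM_def sum_negf mult.commute)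

lemma payoff_swp:
  "payoff (negM M) lam T q p (swp \<tau>) (swp \<sigma>) = - payoff M lam T p q \<sigma> \<tau>"
  unfolding payoff_def cond_payoff_swp
  by (subst sum.swap) (simp add: sum_negf mult.commute)

lemma strat_plan2:
  assumes "is_strat2 T \<tau>" "\<forall>l. 0 \<le> q l" "0 < T"
  shows "in_Y T q (real_plan2 q \<tau>)"
  using strat_plan1[of T "swp \<tau>" q] assms by (simp add: rp1_swp)

lemma sop2_strat:
  assumes "in_Y T q y"
  shows "is_strat2 T (strat_of_plan2 y)"
  using sop1_strat[of T q "swp y"] assms by (simp add: sop1_swp)

lemma sop2_plan:
  assumes y: "in_Y T q y" and h: "is_hist T h h'"
  shows "real_plan2 q (strat_of_plan2 y) l h h' b = y l h h' b"
  using sop1_plan[of T q "swp y" h' h l b] y h by (simp add: sop1_swp rp1_swp is_hist_def)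

definition I1 :: "nat \<Rightarrow> (nat \<times> 'a list \<times> 'b list \<times> 'k \<times> 'a) set" where
  "I1 T = (SIGMA s:{..<T}. {h. length h = s} \<times> {h'. length h' = s} \<times> UNIV \<times> UNIV)"

definition C1 :: "nat \<Rightarrow> ('k \<times> 'a list \<times> 'b list \<times> 'a \<times> 'b) set" where
  "C1 T = {(k,h,h',a,b). length h = length h' \<and> length h < T - 1}"

datatype ('k,'a,'b) xrow = XNN "nat \<times> 'a list \<times> 'b list \<times> 'k \<times> 'a" | XRP 'k | XRM 'k
  | XCP "'k \<times> 'a list \<times> 'b list \<times> 'a \<times> 'b" | XCM "'k \<times> 'a list \<times> 'b list \<times> 'a \<times> 'b"

fun GX :: "('k,'a,'b) xrow \<Rightarrow> nat \<times> 'a list \<times> 'b list \<times> 'k \<times> 'a \<Rightarrow> real" where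
  "GX (XNN c) i = (if i = c then -1 else 0)"
| "GX (XRP k) i = (if i \<in> range (\<lambda>a. (0,[],[],k,a)) then 1 else 0)"
| "GX (XRM k) i = - (if i \<in> range (\<lambda>a. (0,[],[],k,a)) then 1 else 0)"
| "GX (XCP (k,h,h',a,b)) i = (if i \<in> range (\<lambda>a'. (Suc (length h),h@[a],h'@[b],k,a')) then 1 else 0)
     - (if i = (length h,h,h',k,a) then 1 else 0)"
| "GX (XCM (k,h,h',a,b)) i = (if i = (length h,h,h',k,a) then 1 else 0)
     - (if i \<in> range (\<lambda>a'. (Suc (length h),h@[a],h'@[b],k,a')) then 1 else 0)"

fun gX :: "('k \<Rightarrow> real) \<Rightarrow> ('k,'a,'b) xrow \<Rightarrow> real" where
  "gX p (XRP k) = p k"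
| "gX p (XRM k) = - p k"
| "gX p _ = 0"

definition RX :: "nat \<Rightarrow> ('k,'a,'b) xrow set" where
  "RX T = XNN ` I1 T \<union> range XRP \<union> range XRM \<union> XCP ` C1 T \<union> XCM ` C1 T"

lemma finite_len_lt[simp]: "finite {xs::'a::finite list. length xs < n}"
proof -
  have "{xs::'a list. length xs < n} \<subseteq> {xs. set xs \<subseteq> UNIV \<and> length xs \<le> n}" by auto
  then show ?thesis using finite_lists_length_le[of "UNIV::'a set" n] finite_subset by auto
qed

lemma finite_I1[simp]: "finite (I1 T :: (nat \<times> 'a::finite list \<times> 'b::finite list \<times> 'k::finite \<times> 'a) set)"
  unfolding I1_def by (intro finite_SigmaI) auto

lemma finite_C1[simp]: "finite (C1 T :: ('k::finite \<times> 'a::finite list \<times> 'b::finite list \<times> 'a \<times> 'b) set)"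
proof -
  have "C1 T \<subseteq> UNIV \<times> {h::'a list. length h < T} \<times> {h'::'b list. length h' < T} \<times> UNIV \<times> UNIV"
    unfolding C1_def by auto
  then show ?thesis by (rule finite_subset) auto
qed

lemma finite_RX[simp]: "finite (RX T :: ('k::finite,'a::finite,'b::finite) xrow set)"
  unfolding RX_def by auto

lemma sum_range_ind:
  fixes f :: "'a::finite \<Rightarrow> 'i"
  assumes "finite S" "inj f" "range f \<subseteq> S"
  shows "(\<Sum>i\<in>S. (if i \<in> range f then 1 else 0) * (x i :: real)) = (\<Sum>a\<in>UNIV. x (f a))"
proof -
  have "(\<Sum>i\<in>S. (if i \<in> range f then 1 else 0) * x i) = (\<Sum>i\<in>S. if i \<in> range f then x i else 0)"
    by (rule sum.cong) auto
  also have "\<dots> = (\<Sum>i\<in>S \<inter> range f. x i)" using assms(1) by (simp add: sum.inter_restrict)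
  also have "S \<inter> range f = range f" using assms(3) by auto
  also have "(\<Sum>i\<in>range f. x i) = (\<Sum>a\<in>UNIV. x (f a))" using assms(2) by (simp add: sum.reindex)
  finally show ?thesis .
qed

lemma polyh_iff:
  fixes x :: "nat \<times> 'a::finite list \<times> 'b::finite list \<times> 'k::finite \<times> 'a \<Rightarrow> real"
  assumes T: "0 < T"
  shows "polyh (I1 T) (RX T) GX (gX p) x \<longleftrightarrow> in_X T p (\<lambda>k h h' a. x (length h, h, h', k, a))"
proof -
  have nn: "(\<Sum>i\<in>I1 T. GX (XNN c) i * x i) = - x c" if "c \<in> I1 T" for c
    using that by (simp add: sum_ind_c)
  have rt: "(\<Sum>i\<in>I1 T. GX (XRP k) i * x i) = (\<Sum>a\<in>UNIV. x (0,[],[],k,a))" for k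
    by (simp only: GX.simps, rule sum_range_ind) (use T in \<open>auto simp: I1_def inj_on_def\<close>)
  have rtm: "(\<Sum>i\<in>I1 T. GX (XRM k) i * x i) = - (\<Sum>a\<in>UNIV. x (0,[],[],k,a))" for k
    using rt[of k] by (simp add: sum_negf)
  have cn: "(\<Sum>i\<in>I1 T. GX (XCP c) i * x i) = (\<Sum>a'\<in>UNIV. x (Suc (length h),h@[a],h'@[b],k,a')) - x (length h,h,h',k,a)"
    if c: "c = (k,h,h',a,b)" "c \<in> C1 T" for c k h h' a b
  proof -
    have in1: "(length h,h,h',k,a) \<in> I1 T" using c by (auto simp: C1_def I1_def)
    have "(\<Sum>i\<in>I1 T. GX (XCP c) i * x i) = (\<Sum>i\<in>I1 T. (if i \<in> range (\<lambda>a'. (Suc (length h),h@[a],h'@[b],k,a')) then 1 else 0) * x i)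
       - (\<Sum>i\<in>I1 T. (if i = (length h,h,h',k,a) then 1 else 0) * x i)"
      unfolding c(1) by (simp add: left_diff_distrib sum_subtractf)
    also have "(\<Sum>i\<in>I1 T. (if i \<in> range (\<lambda>a'. (Suc (length h),h@[a],h'@[b],k,a')) then 1 else 0) * x i)
        = (\<Sum>a'\<in>UNIV. x (Suc (length h),h@[a],h'@[b],k,a'))"
      by (rule sum_range_ind) (use c in \<open>auto simp: I1_def C1_def inj_on_def\<close>)
    also have "(\<Sum>i\<in>I1 T. (if i = (length h,h,h',k,a) then 1 else 0) * x i) = x (length h,h,h',k,a)"
      using in1 by (simp add: sum_ind_c)
    finally show ?thesis .
  qed
  have cm: "(\<Sum>i\<in>I1 T. GX (XCM c) i * x i) = - ((\<Sum>a'\<in>UNIV. x (Suc (length h),h@[a],h'@[b],k,a')) - x (length h,h,h',k,a))"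
    if c: "c = (k,h,h',a,b)" "c \<in> C1 T" for c k h h' a b
  proof -
    have "GX (XCM c) i = - GX (XCP c) i" for i using c by simp
    then show ?thesis using cn[OF c] by (simp add: sum_negf)
  qed
  show ?thesis
  proof
    assume P: "polyh (I1 T) (RX T) GX (gX p) x"
    show "in_X T p (\<lambda>k h h' a. x (length h, h, h', k, a))"
      unfolding in_X_def
    proof (intro conjI allI impI)
      fix k :: 'k and h :: "'a list" and h' :: "'b list" and a assume "is_hist T h h'"
      then have c: "(length h,h,h',k,a) \<in> I1 T" by (auto simp: I1_def is_hist_def)
      then have "XNN (length h,h,h',k,a) \<in> RX T" by (simp add: RX_def)
      then show "0 \<le> x (length h, h, h', k, a)" using P nn[OF c] unfolding polyh_def by fastforce
    next
      fix k :: 'k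
      have "XRP k \<in> RX T" "XRM k \<in> RX T" by (auto simp: RX_def)
      then show "(\<Sum>a\<in>UNIV. x (length ([]::'a list), [], [], k, a)) = p k"
      proof -
        have "(\<Sum>i\<in>I1 T. GX (XRP k) i * x i) \<le> gX p (XRP k)" "(\<Sum>i\<in>I1 T. GX (XRM k) i * x i) \<le> gX p (XRM k)"
          using P \<open>XRP k \<in> RX T\<close> \<open>XRM k \<in> RX T\<close> unfolding polyh_def by auto
        then show ?thesis using rt[of k] rtm[of k] by simp
      qed
    next
      fix k :: 'k and h :: "'a list" and h' :: "'b list" and a b assume h: "is_hist (T - 1) h h'"
      then have c: "(k,h,h',a,b) \<in> C1 T" by (auto simp: C1_def is_hist_def)
      then have "XCP (k,h,h',a,b) \<in> RX T" "XCM (k,h,h',a,b) \<in> RX T" by (auto simp: RX_def)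
      then show "(\<Sum>a'\<in>UNIV. x (length (h @ [a]), h @ [a], h' @ [b], k, a')) = x (length h, h, h', k, a)"
      proof -
        have "(\<Sum>i\<in>I1 T. GX (XCP (k,h,h',a,b)) i * x i) \<le> gX p (XCP (k,h,h',a,b))"
          "(\<Sum>i\<in>I1 T. GX (XCM (k,h,h',a,b)) i * x i) \<le> gX p (XCM (k,h,h',a,b))"
          using P \<open>XCP (k,h,h',a,b) \<in> RX T\<close> \<open>XCM (k,h,h',a,b) \<in> RX T\<close> unfolding polyh_def by auto
        then show ?thesis using cn[OF refl c] cm[OF refl c] by simp
      qed
    qed
  next
    assume X: "in_X T p (\<lambda>k h h' a. x (length h, h, h', k, a))"
    have X1: "\<And>k (h::'a list) (h'::'b list) a. is_hist T h h' \<Longrightarrow> 0 \<le> x (length h, h, h', k, a)"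
      using X unfolding in_X_def by blast
    have X2: "\<And>k. (\<Sum>a\<in>UNIV. x (0, [], [], k, a)) = p k"
      using X unfolding in_X_def by simp
    have X3: "\<And>k (h::'a list) (h'::'b list) a b. is_hist (T-1) h h' \<Longrightarrow>
       (\<Sum>a'\<in>UNIV. x (Suc (length h), h@[a], h'@[b], k, a')) = x (length h, h, h', k, a)"
      using X unfolding in_X_def by simp
    show "polyh (I1 T) (RX T) GX (gX p) x"
      unfolding polyh_def
    proof
      fix r :: "('k,'a,'b) xrow" assume r: "r \<in> RX T"
      then consider c where "r = XNN c" "c \<in> I1 T" | k where "r = XRP k" | k where "r = XRM k"
        | c where "r = XCP c" "c \<in> C1 T" | c where "r = XCM c" "c \<in> C1 T"
        unfolding RX_def by blast
      then show "(\<Sum>i\<in>I1 T. GX r i * x i) \<le> gX p r"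
      proof cases
        case (1 c)
        obtain s h h' k a where cc: "c = (s,h,h',k,a)" by (cases c) auto
        have "s = length h" "is_hist T h h'" using 1(2) unfolding cc I1_def is_hist_def by auto
        then have "0 \<le> x c" using X1 cc by blast
        then show ?thesis using 1(1) nn[OF 1(2)] by (simp del: GX.simps)
      next
        case (2 k)
        show ?thesis using rt[of k] 2 X2[of k] by (simp del: GX.simps)
      next
        case (3 k)
        show ?thesis using rtm[of k] 3 X2[of k] by (simp del: GX.simps)
      next
        case (4 c)
        then obtain k h h' a b where cc: "c = (k,h,h',a,b)" "is_hist (T - 1) h h'"
          by (auto simp: C1_def is_hist_def)
        have "(\<Sum>a'\<in>UNIV. x (Suc (length h), h @ [a], h' @ [b], k, a')) = x (length h, h, h', k, a)"
          using X3 cc(2) by blast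
        then show ?thesis using 4(1) cn[OF cc(1) 4(2)] by (simp del: GX.simps)
      next
        case (5 c)
        then obtain k h h' a b where cc: "c = (k,h,h',a,b)" "is_hist (T - 1) h h'"
          by (auto simp: C1_def is_hist_def)
        have "(\<Sum>a'\<in>UNIV. x (Suc (length h), h @ [a], h' @ [b], k, a')) = x (length h, h, h', k, a)"
          using X3 cc(2) by blast
        then show ?thesis using 5(1) cm[OF cc(1) 5(2)] by (simp del: GX.simps)
      qed
    qed
  qed
qed

lemma sum_UNIV_pair: "(\<Sum>z\<in>UNIV. G z) = (\<Sum>l\<in>UNIV. \<Sum>b\<in>UNIV. G (l,b))"
  using sum.cartesian_product'[of G "UNIV" "UNIV"] by simp

lemma sum_I1:
  "(\<Sum>i\<in>I1 T. F i) = (\<Sum>s<T. \<Sum>h\<in>{h::'a::finite list. length h = s}. \<Sum>h'\<in>{h'::'b::finite list. length h' = s}.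
      \<Sum>k\<in>(UNIV::'k::finite set). \<Sum>a\<in>(UNIV::'a set). F (s,h,h',k,a))"
proof -
  have "(\<Sum>i\<in>I1 T. F i) = (\<Sum>s<T. \<Sum>y\<in>{h::'a list. length h = s} \<times> {h'::'b list. length h' = s} \<times> (UNIV::'k set) \<times> (UNIV::'a set). F (s,y))"
    unfolding I1_def using sum.Sigma[of "{..<T}" "\<lambda>s. {h::'a list. length h = s} \<times> {h'::'b list. length h' = s} \<times> (UNIV::'k set) \<times> (UNIV::'a set)" "\<lambda>s y. F (s,y)"]
    by simp
  also have "\<dots> = (\<Sum>s<T. \<Sum>h\<in>{h::'a::finite list. length h = s}. \<Sum>h'\<in>{h'::'b::finite list. length h' = s}.
      \<Sum>k\<in>(UNIV::'k::finite set). \<Sum>a\<in>(UNIV::'a set). F (s,h,h',k,a))"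
    by (simp add: sum.cartesian_product' sum_UNIV_pair)
  finally show ?thesis .
qed

lemma swap4:
  "(\<Sum>l\<in>L. \<Sum>s\<in>S. \<Sum>h\<in>H s. \<Sum>h'\<in>H' s. \<Sum>a\<in>A. F l s h h' a) =
   (\<Sum>s\<in>S. \<Sum>h\<in>H s. \<Sum>h'\<in>H' s. \<Sum>a\<in>A. \<Sum>l\<in>L. (F l s h h' a :: real))"
proof -
  have "(\<Sum>l\<in>L. \<Sum>s\<in>S. \<Sum>h\<in>H s. \<Sum>h'\<in>H' s. \<Sum>a\<in>A. F l s h h' a) =
    (\<Sum>s\<in>S. \<Sum>l\<in>L. \<Sum>h\<in>H s. \<Sum>h'\<in>H' s. \<Sum>a\<in>A. F l s h h' a)" by (rule sum.swap)
  also have "\<dots> = (\<Sum>s\<in>S. \<Sum>h\<in>H s. \<Sum>l\<in>L. \<Sum>h'\<in>H' s. \<Sum>a\<in>A. F l s h h' a)"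
    by (rule sum.cong[OF refl], rule sum.swap)
  also have "\<dots> = (\<Sum>s\<in>S. \<Sum>h\<in>H s. \<Sum>h'\<in>H' s. \<Sum>l\<in>L. \<Sum>a\<in>A. F l s h h' a)"
    by (rule sum.cong[OF refl], rule sum.cong[OF refl], rule sum.swap)
  also have "\<dots> = (\<Sum>s\<in>S. \<Sum>h\<in>H s. \<Sum>h'\<in>H' s. \<Sum>a\<in>A. \<Sum>l\<in>L. F l s h h' a)"
    by (rule sum.cong[OF refl], rule sum.cong[OF refl], rule sum.cong[OF refl], rule sum.swap)
  finally show ?thesis .
qed

lemma swap3:
  "(\<Sum>k\<in>K. \<Sum>s\<in>S. \<Sum>h\<in>H s. \<Sum>h'\<in>H' s. F k s h h') =
   (\<Sum>s\<in>S. \<Sum>h\<in>H s. \<Sum>h'\<in>H' s. \<Sum>k\<in>K. (F k s h h' :: real))"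
proof -
  have "(\<Sum>k\<in>K. \<Sum>s\<in>S. \<Sum>h\<in>H s. \<Sum>h'\<in>H' s. F k s h h') =
    (\<Sum>s\<in>S. \<Sum>k\<in>K. \<Sum>h\<in>H s. \<Sum>h'\<in>H' s. F k s h h')" by (rule sum.swap)
  also have "\<dots> = (\<Sum>s\<in>S. \<Sum>h\<in>H s. \<Sum>k\<in>K. \<Sum>h'\<in>H' s. F k s h h')"
    by (rule sum.cong[OF refl], rule sum.swap)
  also have "\<dots> = (\<Sum>s\<in>S. \<Sum>h\<in>H s. \<Sum>h'\<in>H' s. \<Sum>k\<in>K. F k s h h')"
    by (rule sum.cong[OF refl], rule sum.cong[OF refl], rule sum.swap)
  finally show ?thesis .
qed

definition Cg :: "real \<Rightarrow> ('k \<Rightarrow> 'l \<Rightarrow> 'a \<Rightarrow> 'b \<Rightarrow> real) \<Rightarrow>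
   nat \<times> 'a list \<times> 'b list \<times> 'k \<times> 'a \<Rightarrow> nat \<times> 'b list \<times> 'a list \<times> 'l \<times> 'b \<Rightarrow> real" where
  "Cg lam M i j = (case i of (s,h,h',k,a) \<Rightarrow> case j of (t,g',g,l,b) \<Rightarrow>
     if t = s \<and> g = h \<and> g' = h' then lam * (1 - lam) ^ s * M k l a b else 0)"

lemma sum_range_if:
  fixes f :: "'z::finite \<Rightarrow> 'i"
  assumes "finite S" "inj f" "range f \<subseteq> S"
  shows "(\<Sum>j\<in>S. if j \<in> range f then G j else (0::real)) = (\<Sum>z\<in>UNIV. G (f z))"
proof -
  have "(\<Sum>j\<in>S. if j \<in> range f then G j else 0) = (\<Sum>j\<in>S \<inter> range f. G j)"
    using assms(1) by (simp add: sum.inter_restrict)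
  also have "S \<inter> range f = range f" using assms(3) by auto
  also have "(\<Sum>j\<in>range f. G j) = (\<Sum>z\<in>UNIV. G (f z))" using assms(2) by (simp add: sum.reindex)
  finally show ?thesis .
qed

lemma Cg_inner:
  fixes y :: "nat \<times> 'b::finite list \<times> 'a::finite list \<times> 'l::finite \<times> 'b \<Rightarrow> real"
  assumes "s < T" "length h = s" "length h' = s"
  shows "(\<Sum>j\<in>I1 T. Cg lam M (s,h,h',k,a) j * y j) =
     (\<Sum>l\<in>UNIV. \<Sum>b\<in>UNIV. lam * (1 - lam) ^ s * M k l a b * y (s,h',h,l,b))"
proof -
  define f :: "'l \<times> 'b \<Rightarrow> _" where "f = (\<lambda>(l,b). (s,h',h,l,b))"
  have "(\<Sum>j\<in>I1 T. Cg lam M (s,h,h',k,a) j * y j) = (\<Sum>j\<in>I1 T. if j \<in> range f then Cg lam M (s,h,h',k,a) j * y j else 0)"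
    by (rule sum.cong) (auto simp: Cg_def f_def split: prod.splits)
  also have "\<dots> = (\<Sum>z\<in>UNIV. Cg lam M (s,h,h',k,a) (f z) * y (f z))"
    by (rule sum_range_if) (use assms in \<open>auto simp: f_def inj_on_def I1_def\<close>)
  also have "\<dots> = (\<Sum>l\<in>UNIV. \<Sum>b\<in>UNIV. lam * (1 - lam) ^ s * M k l a b * y (s,h',h,l,b))"
    by (subst sum_UNIV_pair) (simp add: f_def Cg_def)
  finally show ?thesis .
qed

lemma bil_payoff:
  fixes \<sigma> :: "('k::finite,'a::finite,'b::finite) strat1" and \<tau> :: "('l::finite,'a,'b) strat2"
    and x :: "nat \<times> 'a list \<times> 'b list \<times> 'k \<times> 'a \<Rightarrow> real"
    and y :: "nat \<times> 'b list \<times> 'a list \<times> 'l \<times> 'b \<Rightarrow> real"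
  assumes s: "is_strat1 T \<sigma>" and t: "is_strat2 T \<tau>"
    and xd: "\<And>s h h' k a. s < T \<Longrightarrow> length h = s \<Longrightarrow> length h' = s \<Longrightarrow> x (s,h,h',k,a) = real_plan1 p \<sigma> k h h' a"
    and yd: "\<And>s h h' l b. s < T \<Longrightarrow> length h = s \<Longrightarrow> length h' = s \<Longrightarrow> y (s,h',h,l,b) = real_plan2 q \<tau> l h h' b"
  shows "bil (I1 T) (I1 T) (Cg lam M) x y = payoff M lam T p q \<sigma> \<tau>"
proof -
  define Tm where "Tm s h h' k a l b = lam * (1 - lam) ^ s * p k * q l * M k l a b * rp1 \<sigma> k h h' a * rp2 \<tau> l h h' b"
    for s h h' k a l b
  have "bil (I1 T) (I1 T) (Cg lam M) x y = (\<Sum>s<T. \<Sum>h\<in>{h::'a list. length h = s}. \<Sum>h'\<in>{h'::'b list. length h' = s}.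
      \<Sum>k\<in>UNIV. \<Sum>a\<in>UNIV. x (s,h,h',k,a) * (\<Sum>j\<in>I1 T. Cg lam M (s,h,h',k,a) j * y j))"
    unfolding bil_alt1 by (rule sum_I1)
  also have "\<dots> = (\<Sum>s<T. \<Sum>h\<in>{h::'a list. length h = s}. \<Sum>h'\<in>{h'::'b list. length h' = s}.
      \<Sum>k\<in>UNIV. \<Sum>a\<in>UNIV. \<Sum>l\<in>UNIV. \<Sum>b\<in>UNIV. Tm s h h' k a l b)"
  proof (intro sum.cong refl)
    fix s h h' k a assume "s \<in> {..<T}" "h \<in> {h::'a list. length h = s}" "h' \<in> {h'::'b list. length h' = s}"
    then have ss: "s < T" "length h = s" "length h' = s" by auto
    show "x (s,h,h',k,a) * (\<Sum>j\<in>I1 T. Cg lam M (s,h,h',k,a) j * y j) = (\<Sum>l\<in>UNIV. \<Sum>b\<in>UNIV. Tm s h h' k a l b)"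
      unfolding Cg_inner[OF ss] using ss
      by (simp add: xd yd sum_distrib_left Tm_def real_plan1_def real_plan2_def rp1_def rp2_def mult_ac)
  qed
  also have "\<dots> = (\<Sum>k\<in>UNIV. \<Sum>s<T. \<Sum>h\<in>{h::'a list. length h = s}. \<Sum>h'\<in>{h'::'b list. length h' = s}.
      \<Sum>a\<in>UNIV. \<Sum>l\<in>UNIV. \<Sum>b\<in>UNIV. Tm s h h' k a l b)"
    by (rule swap3[symmetric])
  also have "\<dots> = (\<Sum>k\<in>UNIV. \<Sum>l\<in>UNIV. \<Sum>s<T. \<Sum>h\<in>{h::'a list. length h = s}. \<Sum>h'\<in>{h'::'b list. length h' = s}.
      \<Sum>a\<in>UNIV. \<Sum>b\<in>UNIV. Tm s h h' k a l b)"
    by (rule sum.cong[OF refl], rule swap4[symmetric])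
  also have "\<dots> = payoff M lam T p q \<sigma> \<tau>"
    unfolding payoff_def
  proof (intro sum.cong refl)
    fix k l
    show "(\<Sum>s<T. \<Sum>h\<in>{h::'a list. length h = s}. \<Sum>h'\<in>{h'::'b list. length h' = s}.
      \<Sum>a\<in>UNIV. \<Sum>b\<in>UNIV. Tm s h h' k a l b) = p k * q l * cond_payoff M lam T \<sigma> \<tau> k l"
      unfolding cond_payoff_plan[OF s t] by (simp add: sum_distrib_left Tm_def mult_ac)
  qed
  finally show ?thesis .
qed

lemma distr_le1:
  fixes d :: "'x::finite \<Rightarrow> real"
  assumes "is_distr d" shows "d x \<le> 1"
proof -
  have "d x \<le> (\<Sum>y\<in>UNIV. d y)" using assms by (intro member_le_sum) (auto simp: is_distr_def)
  then show ?thesis using assms by (simp add: is_distr_def)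
qed

lemma pr1_le1:
  assumes s: "is_strat1 T \<sigma>" and h: "is_hist T h h'"
  shows "pr1 \<sigma> k h h' \<le> 1"
proof -
  have "\<forall>s<length h. is_hist T (take s h) (take s h')" using h by (auto simp: is_hist_def)
  then have "\<forall>s<length h. is_distr (\<sigma> k (take s h) (take s h'))" using s by (simp add: is_strat1_def)
  then show ?thesis unfolding pr1_def
    by (intro prod_le_1) (auto simp: distr_le1 distr_nn)
qed

lemma plan_le:
  fixes x :: "('k,'a::finite,'b) strat1"
  assumes x: "in_X T p x" and h: "is_hist T h h'" and p: "0 \<le> p k"
  shows "0 \<le> x k h h' a \<and> x k h h' a \<le> p k"
proof -
  have nn: "\<forall>a. 0 \<le> x k h h' a" using x h by (simp add: in_X_def)
  have s: "is_strat1 T (strat_of_plan1 x)" by (rule sop1_strat[OF x])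
  have "x k h h' a \<le> (\<Sum>a'\<in>UNIV. x k h h' a')" using nn by (intro member_le_sum) auto
  also have "\<dots> = p k * pr1 (strat_of_plan1 x) k h h'" by (rule sop1_sum[OF x refl h])
  also have "\<dots> \<le> p k * 1" using pr1_le1[OF s h] p by (intro mult_left_mono) auto
  finally show ?thesis using nn by simp
qed

definition unif1 :: "('k,'a::finite,'b) strat1" where "unif1 k h h' a = 1 / real (card (UNIV::'a set))"
definition unif2 :: "('l,'a,'b::finite) strat2" where "unif2 l h h' b = 1 / real (card (UNIV::'b set))"

lemma unif1_strat: "is_strat1 T unif1"
  by (simp add: is_strat1_def is_distr_def unif1_def)
lemma unif2_strat: "is_strat2 T unif2"
  by (simp add: is_strat2_def is_distr_def unif2_def)

lemma value_exists:
  fixes M :: "'k::finite \<Rightarrow> 'l::finite \<Rightarrow> 'a::finite \<Rightarrow> 'b::finite \<Rightarrow> real"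
  assumes T: "0 < T" and p: "\<forall>k. 0 \<le> p k" and q: "\<forall>l. 0 \<le> q l"
  shows "\<exists>v \<sigma> \<tau>. is_strat1 T \<sigma> \<and> is_strat2 T \<tau> \<and>
    (\<forall>\<tau>'. is_strat2 T \<tau>' \<longrightarrow> v \<le> payoff M lam T p q \<sigma> \<tau>') \<and>
    (\<forall>\<sigma>'. is_strat1 T \<sigma>' \<longrightarrow> payoff M lam T p q \<sigma>' \<tau> \<le> v)"
proof -
  let ?I = "I1 T :: (nat \<times> 'a list \<times> 'b list \<times> 'k \<times> 'a) set"
  let ?J = "I1 T :: (nat \<times> 'b list \<times> 'a list \<times> 'l \<times> 'b) set"
  let ?RX = "RX T :: ('k,'a,'b) xrow set"
  let ?RY = "RX T :: ('l,'b,'a) xrow set"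
  define PX where "PX = (\<lambda>x :: nat \<times> 'a list \<times> 'b list \<times> 'k \<times> 'a \<Rightarrow> real. polyh ?I ?RX GX (gX p) x)"
  define PY where "PY = (\<lambda>y :: nat \<times> 'b list \<times> 'a list \<times> 'l \<times> 'b \<Rightarrow> real. polyh ?J ?RY GX (gX q) y)"
  define ux where "ux x = (\<lambda>k (h::'a list) (h'::'b list) a. x (length h, h, h', k, a))" for x :: "nat \<times> 'a list \<times> 'b list \<times> 'k \<times> 'a \<Rightarrow> real"
  define uy where "uy y = (\<lambda>l (g'::'b list) (g::'a list) b. y (length g', g', g, l, b))" for y :: "nat \<times> 'b list \<times> 'a list \<times> 'l \<times> 'b \<Rightarrow> real"
  have PXi: "PX x \<longleftrightarrow> in_X T p (ux x)" for x unfolding PX_def ux_def by (rule polyh_iff[OF T])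
  have PYi: "PY y \<longleftrightarrow> in_Y T q (swp (uy y))" for y unfolding PY_def uy_def in_Y_swp by (rule polyh_iff[OF T])
  define xo where "xo \<sigma> = (\<lambda>(s::nat, h::'a list, h'::'b list, k::'k, a::'a). real_plan1 p \<sigma> k h h' a)" for \<sigma>
  define yo where "yo \<tau> = (\<lambda>(s::nat, g'::'b list, g::'a list, l::'l, b::'b). real_plan2 q \<tau> l g g' b)" for \<tau>
  have PXo: "PX (xo \<sigma>)" if "is_strat1 T \<sigma>" for \<sigma>
  proof -
    have "ux (xo \<sigma>) = real_plan1 p \<sigma>" by (simp add: ux_def xo_def fun_eq_iff)
    then show ?thesis using PXi strat_plan1[OF that p T] by simp
  qed
  have PYo: "PY (yo \<tau>)" if "is_strat2 T \<tau>" for \<tau>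
  proof -
    have e: "swp (uy (yo \<tau>)) = real_plan2 q \<tau>" by (simp add: uy_def yo_def fun_eq_iff)
    show ?thesis by (subst PYi, subst e, rule strat_plan2[OF that q T])
  qed
  define Pm where "Pm = (\<Sum>k\<in>UNIV. p k)"
  define Qm where "Qm = (\<Sum>l\<in>UNIV. q l)"
  have xb: "\<bar>x i\<bar> \<le> Pm" if X: "PX x" and i: "i \<in> ?I" for x i
  proof -
    obtain s h h' k a where ii: "i = (s,h,h',k,a)" by (cases i) auto
    have hh: "s = length h" "is_hist T h h'" using i unfolding ii I1_def is_hist_def by auto
    have "0 \<le> ux x k h h' a \<and> ux x k h h' a \<le> p k"
      by (rule plan_le) (use X PXi hh p in auto)
    moreover have "p k \<le> Pm" unfolding Pm_def using p by (intro member_le_sum) auto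
    ultimately show ?thesis using hh unfolding ii ux_def by simp
  qed
  have yb: "\<bar>y j\<bar> \<le> Qm" if Y: "PY y" and j: "j \<in> ?J" for y j
  proof -
    obtain s g' g l b where jj: "j = (s,g',g,l,b)" by (cases j) auto
    have hh: "s = length g'" "is_hist T g' g" using j unfolding jj I1_def is_hist_def by auto
    have iX: "in_X T q (uy y)" using Y PYi by simp
    have "0 \<le> uy y l g' g b \<and> uy y l g' g b \<le> q l"
      by (rule plan_le[OF iX hh(2)]) (use q in auto)
    moreover have "q l \<le> Qm" unfolding Qm_def using q by (intro member_le_sum) auto
    ultimately show ?thesis using hh unfolding jj uy_def by simp
  qed
  define B where "B = (\<Sum>i\<in>?I. \<Sum>j\<in>?J. Pm * \<bar>Cg lam M i j\<bar> * Qm)"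
  have bnd: "\<bar>bil ?I ?J (Cg lam M) x y\<bar> \<le> B" if X: "PX x" and Y: "PY y" for x y
  proof -
    have "\<bar>bil ?I ?J (Cg lam M) x y\<bar> \<le> (\<Sum>i\<in>?I. \<bar>\<Sum>j\<in>?J. x i * Cg lam M i j * y j\<bar>)"
      unfolding bil_def by (rule sum_abs)
    also have "\<dots> \<le> (\<Sum>i\<in>?I. \<Sum>j\<in>?J. \<bar>x i * Cg lam M i j * y j\<bar>)"
      by (intro sum_mono sum_abs)
    also have "\<dots> \<le> B" unfolding B_def
    proof (intro sum_mono)
      fix i j assume i: "i \<in> ?I" and j: "j \<in> ?J"
      have "\<bar>x i * Cg lam M i j * y j\<bar> = \<bar>x i\<bar> * \<bar>Cg lam M i j\<bar> * \<bar>y j\<bar>" by (simp add: abs_mult)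
      also have "\<dots> \<le> Pm * \<bar>Cg lam M i j\<bar> * Qm"
        using xb[OF X i] yb[OF Y j] by (intro mult_mono) auto
      finally show "\<bar>x i * Cg lam M i j * y j\<bar> \<le> Pm * \<bar>Cg lam M i j\<bar> * Qm" .
    qed
    finally show ?thesis .
  qed
  have X0: "polyh ?I ?RX GX (gX p) (xo unif1)" using PXo[OF unif1_strat] unfolding PX_def .
  have Y0: "polyh ?J ?RY GX (gX q) (yo unif2)" using PYo[OF unif2_strat] unfolding PY_def .
  have bnd': "\<And>x y. polyh ?I ?RX GX (gX p) x \<Longrightarrow> polyh ?J ?RY GX (gX q) y \<Longrightarrow> \<bar>bil ?I ?J (Cg lam M) x y\<bar> \<le> B"
    using bnd unfolding PX_def PY_def .
  obtain x y v where xyv: "PX x" "PY y" "\<forall>y'. PY y' \<longrightarrow> v \<le> bil ?I ?J (Cg lam M) x y'"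
    "\<forall>x'. PX x' \<longrightarrow> bil ?I ?J (Cg lam M) x' y \<le> v"
    using gm[where I="?I" and J="?J" and RX="?RX" and RY="?RY" and G=GX and g="gX p" and H=GX and h="gX q"
      and C="Cg lam M" and B=B, OF finite_I1 finite_I1 finite_RX finite_RX X0 Y0 bnd']
    unfolding PX_def PY_def by blast
  define \<sigma> where "\<sigma> = strat_of_plan1 (ux x)"
  define \<tau> where "\<tau> = strat_of_plan2 (swp (uy y))"
  have iX: "in_X T p (ux x)" using xyv(1) PXi by simp
  have iY: "in_Y T q (swp (uy y))" using xyv(2) PYi by simp
  have s: "is_strat1 T \<sigma>" unfolding \<sigma>_def by (rule sop1_strat[OF iX])
  have t: "is_strat2 T \<tau>" unfolding \<tau>_def by (rule sop2_strat[OF iY])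
  show ?thesis
  proof (intro exI conjI allI impI)
    show "is_strat1 T \<sigma>" "is_strat2 T \<tau>" by (fact s, fact t)
  next
    fix \<tau>' :: "('l,'a,'b) strat2" assume t': "is_strat2 T \<tau>'"
    have "bil ?I ?J (Cg lam M) x (yo \<tau>') = payoff M lam T p q \<sigma> \<tau>'"
    proof (rule bil_payoff[OF s t'])
      fix s and h :: "'a list" and h' :: "'b list" and k a assume "s < T" "length h = s" "length h' = s"
      then have hh: "is_hist T h h'" by (simp add: is_hist_def)
      show "x (s, h, h', k, a) = real_plan1 p \<sigma> k h h' a"
        unfolding \<sigma>_def sop1_plan[OF iX hh] using \<open>length h = s\<close> by (simp add: ux_def)
    next
      fix s and h :: "'a list" and h' :: "'b list" and l b
      show "yo \<tau>' (s, h', h, l, b) = real_plan2 q \<tau>' l h h' b" by (simp add: yo_def)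
    qed
    then show "v \<le> payoff M lam T p q \<sigma> \<tau>'" using xyv(3) PYo[OF t'] by metis
  next
    fix \<sigma>' :: "('k,'a,'b) strat1" assume s': "is_strat1 T \<sigma>'"
    have "bil ?I ?J (Cg lam M) (xo \<sigma>') y = payoff M lam T p q \<sigma>' \<tau>"
    proof (rule bil_payoff[OF s' t])
      fix s and h :: "'a list" and h' :: "'b list" and k a
      show "xo \<sigma>' (s, h, h', k, a) = real_plan1 p \<sigma>' k h h' a" by (simp add: xo_def)
    next
      fix s and h :: "'a list" and h' :: "'b list" and l b assume "s < T" "length h = s" "length h' = s"
      then have hh: "is_hist T h h'" by (simp add: is_hist_def)
      show "y (s, h', h, l, b) = real_plan2 q \<tau> l h h' b"
        unfolding \<tau>_def sop2_plan[OF iY hh] using \<open>length h' = s\<close> by (simp add: uy_def)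
    qed
    then show "payoff M lam T p q \<sigma>' \<tau> \<le> v" using xyv(4) PXo[OF s'] by metis
  qed
qed

lemma chain:
  fixes E Z \<Phi> :: "nat \<Rightarrow> real"
  assumes T: "0 < T" and lam: "0 \<le> 1 - lam"
    and phi: "\<And>s. s < T \<Longrightarrow> \<Phi> s = lam * E s + (1 - lam) * Z s"
    and zT: "Z (T - 1) = 0"
    and zs: "\<And>s. Suc s < T \<Longrightarrow> Z s \<le> \<Phi> (Suc s)"
  shows "\<Phi> 0 \<le> (\<Sum>t<T. lam * (1 - lam) ^ t * E t)"
proof -
  define \<Psi> where "\<Psi> s = (\<Sum>t<T - s. lam * (1 - lam) ^ t * E (s + t))" for s
  have "\<Phi> n \<le> \<Psi> n" if "n \<le> T - 1" for n
    using that
  proof (induction n rule: inc_induct)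
    case base
    have "\<Psi> (T - 1) = lam * E (T - 1)" unfolding \<Psi>_def using T by simp
    then show ?case using phi[of "T - 1"] zT T by simp
  next
    case (step n)
    have "\<Psi> n = lam * E n + (1 - lam) * \<Psi> (Suc n)"
    proof -
      have tn: "T - n = Suc (T - Suc n)" using step.hyps by simp
      have "\<Psi> n = lam * (1 - lam) ^ 0 * E (n + 0) + (\<Sum>t<T - Suc n. lam * (1 - lam) ^ Suc t * E (n + Suc t))"
        unfolding \<Psi>_def tn sum.lessThan_Suc_shift by simp
      also have "(\<Sum>t<T - Suc n. lam * (1 - lam) ^ Suc t * E (n + Suc t)) = (1 - lam) * \<Psi> (Suc n)"
        unfolding \<Psi>_def by (simp add: sum_distrib_left mult_ac)
      finally show ?thesis by simp
    qed
    moreover have "\<Phi> n = lam * E n + (1 - lam) * Z n" using phi step.hyps by simp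
    moreover have "Z n \<le> \<Phi> (Suc n)" using zs step.hyps by simp
    ultimately show ?case using step.IH lam
      by (smt (verit, best) mult_left_mono)
  qed
  from this[of 0] show ?thesis unfolding \<Psi>_def by simp
qed

lemma chain_ge:
  fixes E Z \<Phi> :: "nat \<Rightarrow> real"
  assumes T: "0 < T" and lam: "0 \<le> 1 - lam"
    and phi: "\<And>s. s < T \<Longrightarrow> \<Phi> s = lam * E s + (1 - lam) * Z s"
    and zT: "Z (T - 1) = 0"
    and zs: "\<And>s. Suc s < T \<Longrightarrow> Z s \<ge> \<Phi> (Suc s)"
  shows "\<Phi> 0 \<ge> (\<Sum>t<T. lam * (1 - lam) ^ t * E t)"
proof -
  have "(\<lambda>s. - \<Phi> s) 0 \<le> (\<Sum>t<T. lam * (1 - lam) ^ t * (\<lambda>s. - E s) t)"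
  proof (rule chain[where Z="\<lambda>s. - Z s"])
    show "0 < T" by (rule T)
    show "0 \<le> 1 - lam" by (rule lam)
    show "- \<Phi> s = lam * - E s + (1 - lam) * - Z s" if "s < T" for s using phi[OF that] by simp
    show "- Z (T - 1) = 0" using zT by simp
    show "- Z s \<le> - \<Phi> (Suc s)" if "Suc s < T" for s using zs[OF that] by simp
  qed
  then show ?thesis by (simp add: sum_negf)
qed

definition Rv :: "('k \<Rightarrow> 'l \<Rightarrow> 'a \<Rightarrow> 'b \<Rightarrow> real) \<Rightarrow> real \<Rightarrow> ('k,'a,'b) strat1 \<Rightarrow>
   ('l \<Rightarrow> 'a list \<Rightarrow> 'b list \<Rightarrow> 'a \<Rightarrow> 'b \<Rightarrow> real) \<Rightarrow> 'l \<Rightarrow> 'a list \<Rightarrow> 'b list \<Rightarrow> 'b \<Rightarrow> real" where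
  "Rv M lam x U l h h' b' = lam * (\<Sum>k\<in>UNIV. \<Sum>a'\<in>UNIV. M k l a' b' * x k h h' a') + (1 - lam) * (\<Sum>a'\<in>UNIV. U l h h' a' b')"

definition Ey where
  "Ey M x l y s = (\<Sum>h\<in>{h. length h = s}. \<Sum>h'\<in>{h'. length h' = s}. \<Sum>b'\<in>UNIV.
      y h h' b' * (\<Sum>k\<in>UNIV. \<Sum>a'\<in>UNIV. M k l a' b' * x k h h' a'))"

definition Zy where
  "Zy U l y s = (\<Sum>h\<in>{h. length h = s}. \<Sum>h'\<in>{h'. length h' = s}. \<Sum>b'\<in>UNIV. y h h' b' * (\<Sum>a'\<in>UNIV. U l h h' a' b'))"

definition Phy where
  "Phy M lam x U l y s = (\<Sum>h\<in>{h. length h = s}. \<Sum>h'\<in>{h'. length h' = s}. \<Sum>b'\<in>UNIV. y h h' b' * Rv M lam x U l h h' b')"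

lemma Phy_split: "Phy M lam x U l y s = lam * Ey M x l y s + (1 - lam) * Zy U l y s"
  unfolding Phy_def Ey_def Zy_def Rv_def
  by (simp add: sum_distrib_left sum.distrib algebra_simps)

lemma Phy_Zy:
  fixes M :: "'k::finite \<Rightarrow> 'l \<Rightarrow> 'a::finite \<Rightarrow> 'b::finite \<Rightarrow> real"
  shows "Phy M lam x U l y (Suc s) - Zy U l y s = (\<Sum>h\<in>{h. length h = s}. \<Sum>a\<in>UNIV. \<Sum>h'\<in>{h'. length h' = s}. \<Sum>b\<in>UNIV.
     (\<Sum>b'\<in>UNIV. y (h @ [a]) (h' @ [b]) b' * Rv M lam x U l (h @ [a]) (h' @ [b]) b') - y h h' b * U l h h' a b)"
proof -
  have z: "Zy U l y s = (\<Sum>h\<in>{h. length h = s}. \<Sum>a\<in>UNIV. \<Sum>h'\<in>{h'. length h' = s}. \<Sum>b\<in>UNIV. y h h' b * U l h h' a b)"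
  proof -
    have "Zy U l y s = (\<Sum>h\<in>{h. length h = s}. \<Sum>h'\<in>{h'. length h' = s}. \<Sum>b\<in>UNIV. \<Sum>a\<in>UNIV. y h h' b * U l h h' a b)"
      unfolding Zy_def by (simp add: sum_distrib_left)
    also have "\<dots> = (\<Sum>h\<in>{h. length h = s}. \<Sum>h'\<in>{h'. length h' = s}. \<Sum>a\<in>UNIV. \<Sum>b\<in>UNIV. y h h' b * U l h h' a b)"
      by (rule sum.cong[OF refl], rule sum.cong[OF refl], rule sum.swap)
    also have "\<dots> = (\<Sum>h\<in>{h. length h = s}. \<Sum>a\<in>UNIV. \<Sum>h'\<in>{h'. length h' = s}. \<Sum>b\<in>UNIV. y h h' b * U l h h' a b)"
      by (rule sum.cong[OF refl], rule sum.swap)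
    finally show ?thesis .
  qed
  have p: "Phy M lam x U l y (Suc s) = (\<Sum>h\<in>{h. length h = s}. \<Sum>a\<in>UNIV. \<Sum>h'\<in>{h'. length h' = s}. \<Sum>b\<in>UNIV.
     (\<Sum>b'\<in>UNIV. y (h @ [a]) (h' @ [b]) b' * Rv M lam x U l (h @ [a]) (h' @ [b]) b'))"
    by (simp only: Phy_def sum_len_Suc)
  show ?thesis unfolding z p by (simp add: sum_subtractf)
qed

lemma Zy_T:
  fixes y :: "'a list \<Rightarrow> 'b list \<Rightarrow> 'b \<Rightarrow> real"
  assumes "\<And>h h' a b. length h = T - 1 \<Longrightarrow> length h' = T - 1 \<Longrightarrow> U l h h' a b = 0"
  shows "Zy U l y (T - 1) = 0"
  unfolding Zy_def using assms by simp

lemma Phy_0: "Phy M lam x U l y 0 = (\<Sum>b'\<in>UNIV. y [] [] b' * Rv M lam x U l [] [] b')"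
  unfolding Phy_def by simp

lemma lp1_lower:
  fixes M :: "'k::finite \<Rightarrow> 'l::finite \<Rightarrow> 'a::finite \<Rightarrow> 'b::finite \<Rightarrow> real"
    and y :: "'a list \<Rightarrow> 'b list \<Rightarrow> 'b \<Rightarrow> real"
  assumes F: "lp1_feasible M lam T p x u0 U" and T: "0 < T" and lam: "lam \<le> 1"
    and yn: "\<And>h h' b. is_hist T h h' \<Longrightarrow> 0 \<le> y h h' b"
    and y0: "(\<Sum>b\<in>UNIV. y [] [] b) = 1"
    and yc: "\<And>h h' a b. is_hist (T - 1) h h' \<Longrightarrow> (\<Sum>b'\<in>UNIV. y (h @ [a]) (h' @ [b]) b') = y h h' b"
  shows "u0 l \<le> (\<Sum>t<T. lam * (1 - lam) ^ t * Ey M x l y t)"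
proof -
  have Ut: "\<And>h h' a b. length h = T - 1 \<Longrightarrow> length h' = T - 1 \<Longrightarrow> U l h h' a b = 0"
    using F unfolding lp1_feasible_def by blast
  have root: "\<And>b'. u0 l \<le> Rv M lam x U l [] [] b'"
    using F unfolding lp1_feasible_def Rv_def by blast
  have stp: "\<And>h h' a b b'. is_hist (T - 1) h h' \<Longrightarrow> U l h h' a b \<le> Rv M lam x U l (h @ [a]) (h' @ [b]) b'"
    using F unfolding lp1_feasible_def Rv_def by blast
  have h00: "is_hist T ([]::'a list) ([]::'b list)" using T by (simp add: is_hist_def)
  have "u0 l = (\<Sum>b'\<in>UNIV. y [] [] b' * u0 l)" using y0 by (simp add: sum_distrib_right[symmetric])
  also have "\<dots> \<le> Phy M lam x U l y 0" unfolding Phy_0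
    by (intro sum_mono mult_left_mono root yn[OF h00])
  also have "\<dots> \<le> (\<Sum>t<T. lam * (1 - lam) ^ t * Ey M x l y t)"
  proof (rule chain[where Z="Zy U l y"])
    show "0 < T" "0 \<le> 1 - lam" using T lam by auto
    show "Phy M lam x U l y s = lam * Ey M x l y s + (1 - lam) * Zy U l y s" for s by (rule Phy_split)
    show "Zy U l y (T - 1) = 0" by (rule Zy_T) (rule Ut)
  next
    fix s assume s: "Suc s < T"
    have "0 \<le> Phy M lam x U l y (Suc s) - Zy U l y s"
      unfolding Phy_Zy
    proof (intro sum_nonneg)
      fix h :: "'a list" and a and h' :: "'b list" and b
      assume "h \<in> {h. length h = s}" "h' \<in> {h'. length h' = s}"
      then have hh: "is_hist (T - 1) h h'" and hT: "is_hist T (h @ [a]) (h' @ [b])"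
        using s by (auto simp: is_hist_def)
      have "y h h' b * U l h h' a b = (\<Sum>b'\<in>UNIV. y (h @ [a]) (h' @ [b]) b' * U l h h' a b)"
        using yc[OF hh, of a b] by (simp add: sum_distrib_right[symmetric])
      also have "\<dots> \<le> (\<Sum>b'\<in>UNIV. y (h @ [a]) (h' @ [b]) b' * Rv M lam x U l (h @ [a]) (h' @ [b]) b')"
        by (intro sum_mono mult_left_mono stp[OF hh] yn[OF hT])
      finally show "0 \<le> (\<Sum>b'\<in>UNIV. y (h @ [a]) (h' @ [b]) b' * Rv M lam x U l (h @ [a]) (h' @ [b]) b') - y h h' b * U l h h' a b"
        by simp
    qed
    then show "Zy U l y s \<le> Phy M lam x U l y (Suc s)" by simp
  qed
  finally show ?thesis .
qed

lemma lp1_exact: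
  fixes M :: "'k::finite \<Rightarrow> 'l::finite \<Rightarrow> 'a::finite \<Rightarrow> 'b::finite \<Rightarrow> real"
    and y :: "'a list \<Rightarrow> 'b list \<Rightarrow> 'b \<Rightarrow> real"
  assumes T: "0 < T" and lam: "lam \<le> 1"
    and Ut: "\<And>h h' a b. length h = T - 1 \<Longrightarrow> length h' = T - 1 \<Longrightarrow> U l h h' a b = 0"
    and root: "(\<Sum>b'\<in>UNIV. y [] [] b' * Rv M lam x U l [] [] b') = u0"
    and stp: "\<And>h h' a b. is_hist (T - 1) h h' \<Longrightarrow>
       (\<Sum>b'\<in>UNIV. y (h @ [a]) (h' @ [b]) b' * Rv M lam x U l (h @ [a]) (h' @ [b]) b') = y h h' b * U l h h' a b"
  shows "u0 = (\<Sum>t<T. lam * (1 - lam) ^ t * Ey M x l y t)"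
proof -
  have zs: "Zy U l y s = Phy M lam x U l y (Suc s)" if s: "Suc s < T" for s
  proof -
    have "Phy M lam x U l y (Suc s) - Zy U l y s = 0"
      unfolding Phy_Zy
    proof (intro sum.neutral ballI)
      fix h :: "'a list" and a and h' :: "'b list" and b
      assume "h \<in> {h. length h = s}" "h' \<in> {h'. length h' = s}"
      then have hh: "is_hist (T - 1) h h'" using s by (auto simp: is_hist_def)
      show "(\<Sum>b'\<in>UNIV. y (h @ [a]) (h' @ [b]) b' * Rv M lam x U l (h @ [a]) (h' @ [b]) b') - y h h' b * U l h h' a b = 0"
        using stp[OF hh] by simp
    qed
    then show ?thesis by simp
  qed
  have phi: "Phy M lam x U l y s = lam * Ey M x l y s + (1 - lam) * Zy U l y s" for s by (rule Phy_split)
  have zT: "Zy U l y (T - 1) = 0" by (rule Zy_T) (rule Ut)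
  have "Phy M lam x U l y 0 \<le> (\<Sum>t<T. lam * (1 - lam) ^ t * Ey M x l y t)"
    by (rule chain[where Z="Zy U l y"]) (use T lam phi zT zs in auto)
  moreover have "Phy M lam x U l y 0 \<ge> (\<Sum>t<T. lam * (1 - lam) ^ t * Ey M x l y t)"
    by (rule chain_ge[where Z="Zy U l y"]) (use T lam phi zT zs in auto)
  ultimately show ?thesis using root unfolding Phy_0 by simp
qed

lemma payl_Ey:
  fixes M :: "'k::finite \<Rightarrow> 'l::finite \<Rightarrow> 'a::finite \<Rightarrow> 'b::finite \<Rightarrow> real"
  assumes x: "in_X T p x" and t: "is_strat2 T \<tau>"
  shows "(\<Sum>k\<in>UNIV. p k * cond_payoff M lam T (strat_of_plan1 x) \<tau> k l)
    = (\<Sum>t<T. lam * (1 - lam) ^ t * Ey M x l (\<lambda>h h' b. rp2 \<tau> l h h' b) t)"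
proof -
  have s: "is_strat1 T (strat_of_plan1 x)" by (rule sop1_strat[OF x])
  have "(\<Sum>k\<in>UNIV. p k * cond_payoff M lam T (strat_of_plan1 x) \<tau> k l) =
    (\<Sum>k\<in>UNIV. \<Sum>t<T. \<Sum>h\<in>{h::'a list. length h = t}. \<Sum>h'\<in>{h'::'b list. length h' = t}.
      lam * (1 - lam) ^ t * (\<Sum>a\<in>UNIV. \<Sum>b\<in>UNIV. M k l a b * x k h h' a * rp2 \<tau> l h h' b))"
  proof (intro sum.cong refl)
    fix k
    show "p k * cond_payoff M lam T (strat_of_plan1 x) \<tau> k l = (\<Sum>t<T. \<Sum>h\<in>{h::'a list. length h = t}. \<Sum>h'\<in>{h'::'b list. length h' = t}.
      lam * (1 - lam) ^ t * (\<Sum>a\<in>UNIV. \<Sum>b\<in>UNIV. M k l a b * x k h h' a * rp2 \<tau> l h h' b))"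
    proof -
      have "p k * cond_payoff M lam T (strat_of_plan1 x) \<tau> k l = (\<Sum>t<T. p k * (lam * (1 - lam) ^ t *
        (\<Sum>h\<in>{h::'a list. length h = t}. \<Sum>h'\<in>{h'::'b list. length h' = t}. \<Sum>a\<in>UNIV. \<Sum>b\<in>UNIV.
        M k l a b * rp1 (strat_of_plan1 x) k h h' a * rp2 \<tau> l h h' b)))"
        unfolding cond_payoff_plan[OF s t] by (rule sum_distrib_left)
      also have "\<dots> = (\<Sum>t<T. \<Sum>h\<in>{h::'a list. length h = t}. \<Sum>h'\<in>{h'::'b list. length h' = t}.
        lam * (1 - lam) ^ t * (\<Sum>a\<in>UNIV. \<Sum>b\<in>UNIV. M k l a b * x k h h' a * rp2 \<tau> l h h' b))"
      proof (rule sum.cong[OF refl])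
        fix t assume "t \<in> {..<T}"
        then have tT: "t < T" by simp
        have A: "(\<Sum>h\<in>{h::'a list. length h = t}. \<Sum>h'\<in>{h'::'b list. length h' = t}. \<Sum>a\<in>UNIV. \<Sum>b\<in>UNIV.
            M k l a b * x k h h' a * rp2 \<tau> l h h' b) =
          (\<Sum>h\<in>{h::'a list. length h = t}. \<Sum>h'\<in>{h'::'b list. length h' = t}. \<Sum>a\<in>UNIV. \<Sum>b\<in>UNIV.
            M k l a b * (p k * rp1 (strat_of_plan1 x) k h h' a) * rp2 \<tau> l h h' b)"
        proof (intro sum.cong refl)
          fix h h' a b assume "h \<in> {h::'a list. length h = t}" "h' \<in> {h'::'b list. length h' = t}"
          then have hh: "is_hist T h h'" using tT by (auto simp: is_hist_def)
          have xe: "x k h h' a = p k * rp1 (strat_of_plan1 x) k h h' a"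
            using sop1_plan[OF x hh, of k a] by (simp add: real_plan1_def rp1_def mult.assoc)
          show "M k l a b * x k h h' a * rp2 \<tau> l h h' b = M k l a b * (p k * rp1 (strat_of_plan1 x) k h h' a) * rp2 \<tau> l h h' b"
            by (simp add: xe)
        qed
        have "p k * (lam * (1 - lam) ^ t *
          (\<Sum>h\<in>{h::'a list. length h = t}. \<Sum>h'\<in>{h'::'b list. length h' = t}. \<Sum>a\<in>UNIV. \<Sum>b\<in>UNIV.
            M k l a b * rp1 (strat_of_plan1 x) k h h' a * rp2 \<tau> l h h' b)) =
          lam * (1 - lam) ^ t * (\<Sum>h\<in>{h::'a list. length h = t}. \<Sum>h'\<in>{h'::'b list. length h' = t}. \<Sum>a\<in>UNIV. \<Sum>b\<in>UNIV.
            M k l a b * x k h h' a * rp2 \<tau> l h h' b)"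
          unfolding A by (simp add: sum_distrib_left mult_ac)
        then show "p k * (lam * (1 - lam) ^ t *
          (\<Sum>h\<in>{h::'a list. length h = t}. \<Sum>h'\<in>{h'::'b list. length h' = t}. \<Sum>a\<in>UNIV. \<Sum>b\<in>UNIV.
            M k l a b * rp1 (strat_of_plan1 x) k h h' a * rp2 \<tau> l h h' b)) =
          (\<Sum>h\<in>{h::'a list. length h = t}. \<Sum>h'\<in>{h'::'b list. length h' = t}.
            lam * (1 - lam) ^ t * (\<Sum>a\<in>UNIV. \<Sum>b\<in>UNIV. M k l a b * x k h h' a * rp2 \<tau> l h h' b))"
          by (simp add: sum_distrib_left)
      qed
      finally show ?thesis .
    qed
  qed
  also have "\<dots> = (\<Sum>t<T. \<Sum>h\<in>{h::'a list. length h = t}. \<Sum>h'\<in>{h'::'b list. length h' = t}. \<Sum>k\<in>UNIV.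
      lam * (1 - lam) ^ t * (\<Sum>a\<in>UNIV. \<Sum>b\<in>UNIV. M k l a b * x k h h' a * rp2 \<tau> l h h' b))"
    by (rule swap3)
  also have "\<dots> = (\<Sum>t<T. lam * (1 - lam) ^ t * Ey M x l (\<lambda>h h' b. rp2 \<tau> l h h' b) t)"
  proof (rule sum.cong[OF refl])
    fix t
    have e: "(\<Sum>k\<in>UNIV. \<Sum>a\<in>UNIV. \<Sum>b\<in>UNIV. M k l a b * x k h h' a * rp2 \<tau> l h h' b)
      = (\<Sum>b\<in>UNIV. rp2 \<tau> l h h' b * (\<Sum>k\<in>UNIV. \<Sum>a\<in>UNIV. M k l a b * x k h h' a))" for h h'
    proof -
      have "(\<Sum>k\<in>UNIV. \<Sum>a\<in>UNIV. \<Sum>b\<in>UNIV. M k l a b * x k h h' a * rp2 \<tau> l h h' b)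
        = (\<Sum>k\<in>UNIV. \<Sum>b\<in>UNIV. \<Sum>a\<in>UNIV. M k l a b * x k h h' a * rp2 \<tau> l h h' b)"
        by (rule sum.cong[OF refl], rule sum.swap)
      also have "\<dots> = (\<Sum>b\<in>UNIV. \<Sum>k\<in>UNIV. \<Sum>a\<in>UNIV. M k l a b * x k h h' a * rp2 \<tau> l h h' b)"
        by (rule sum.swap)
      finally show ?thesis by (simp add: sum_distrib_left mult_ac)
    qed
    have "Ey M x l (\<lambda>h h' b. rp2 \<tau> l h h' b) t = (\<Sum>h\<in>{h::'a list. length h = t}. \<Sum>h'\<in>{h'::'b list. length h' = t}.
       \<Sum>k\<in>UNIV. \<Sum>a\<in>UNIV. \<Sum>b\<in>UNIV. M k l a b * x k h h' a * rp2 \<tau> l h h' b)"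
      unfolding Ey_def e by simp
    then show "(\<Sum>h\<in>{h::'a list. length h = t}. \<Sum>h'\<in>{h'::'b list. length h' = t}. \<Sum>k\<in>UNIV.
      lam * (1 - lam) ^ t * (\<Sum>a\<in>UNIV. \<Sum>b\<in>UNIV. M k l a b * x k h h' a * rp2 \<tau> l h h' b)) =
      lam * (1 - lam) ^ t * Ey M x l (\<lambda>h h' b. rp2 \<tau> l h h' b) t"
      by (simp add: sum_distrib_left)
  qed
  finally show ?thesis .
qed

lemma rp2_props:
  assumes t: "is_strat2 T \<tau>" and T: "0 < T"
  shows "\<And>h h' b. is_hist T h h' \<Longrightarrow> 0 \<le> rp2 \<tau> l h h' b"
    and "(\<Sum>b\<in>UNIV. rp2 \<tau> l [] [] b) = 1"
    and "\<And>h h' a b. is_hist (T - 1) h h' \<Longrightarrow> (\<Sum>b'\<in>UNIV. rp2 \<tau> l (h @ [a]) (h' @ [b]) b') = rp2 \<tau> l h h' b"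
proof -
  have Y: "in_Y T (\<lambda>_. 1) (real_plan2 (\<lambda>_. 1) \<tau>)" by (rule strat_plan2[OF t _ T]) simp
  have e: "real_plan2 (\<lambda>_. 1) \<tau> = rp2 \<tau>" by (simp add: fun_eq_iff real_plan2_def rp2_def)
  show "\<And>h h' b. is_hist T h h' \<Longrightarrow> 0 \<le> rp2 \<tau> l h h' b"
    and "(\<Sum>b\<in>UNIV. rp2 \<tau> l [] [] b) = 1"
    and "\<And>h h' a b. is_hist (T - 1) h h' \<Longrightarrow> (\<Sum>b'\<in>UNIV. rp2 \<tau> l (h @ [a]) (h' @ [b]) b') = rp2 \<tau> l h h' b"
    using Y unfolding e in_Y_def by auto
qed

fun Ubr :: "('k \<Rightarrow> 'l \<Rightarrow> 'a \<Rightarrow> 'b \<Rightarrow> real) \<Rightarrow> real \<Rightarrow> ('k,'a,'b) strat1 \<Rightarrow> 'l \<Rightarrow> nat \<Rightarrow>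
    'a list \<Rightarrow> 'b list \<Rightarrow> 'a \<Rightarrow> 'b \<Rightarrow> real" where
  "Ubr M lam x l 0 h h' a b = 0"
| "Ubr M lam x l (Suc n) h h' a b = Min (range (\<lambda>b'. lam * (\<Sum>k\<in>UNIV. \<Sum>a'\<in>UNIV. M k l a' b' * x k (h @ [a]) (h' @ [b]) a')
     + (1 - lam) * (\<Sum>a'\<in>UNIV. Ubr M lam x l n (h @ [a]) (h' @ [b]) a' b')))"

definition UBf where "UBf M lam T x = (\<lambda>l h h' a b. Ubr M lam x l (T - 1 - length h) h h' a b)"

definition u0br where "u0br M lam T x l = Min (range (Rv M lam x (UBf M lam T x) l [] []))"

definition brb where "brb M lam T x l h h' =
  (SOME b. Rv M lam x (UBf M lam T x) l h h' b = Min (range (Rv M lam x (UBf M lam T x) l h h')))"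

definition tbr where "tbr M lam T x = (\<lambda>l h h' b. if b = brb M lam T x l h h' then 1 else (0::real))"

lemma UBf_term: "length h = T - 1 \<Longrightarrow> UBf M lam T x l h h' a b = 0"
  by (simp add: UBf_def)

lemma UBf_step:
  assumes "is_hist (T - 1) h h'"
  shows "UBf M lam T x l h h' a b = Min (range (Rv M lam x (UBf M lam T x) l (h @ [a]) (h' @ [b])))"
proof -
  have e: "T - 1 - length h = Suc (T - 1 - length (h @ [a]))" using assms by (simp add: is_hist_def; linarith)
  show ?thesis unfolding UBf_def e by (simp add: Rv_def UBf_def)
qed

lemma brb_min:
  fixes M :: "'k \<Rightarrow> 'l \<Rightarrow> 'a \<Rightarrow> 'b::finite \<Rightarrow> real"
  shows "Rv M lam x (UBf M lam T x) l h h' (brb M lam T x l h h') = Min (range (Rv M lam x (UBf M lam T x) l h h'))"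
proof -
  have "Min (range (Rv M lam x (UBf M lam T x) l h h')) \<in> range (Rv M lam x (UBf M lam T x) l h h')"
    by (rule Min_in) auto
  then have "\<exists>b. Rv M lam x (UBf M lam T x) l h h' b = Min (range (Rv M lam x (UBf M lam T x) l h h'))"
    by (metis (mono_tags, lifting) imageE)
  then show ?thesis unfolding brb_def by (rule someI_ex)
qed

lemma Min_range_le:
  fixes f :: "'b::finite \<Rightarrow> real"
  shows "Min (range f) \<le> f b"
  by (rule Min_le) auto

lemma tbr_strat: "is_strat2 T (tbr (M :: 'k \<Rightarrow> 'l \<Rightarrow> 'a \<Rightarrow> 'b::finite \<Rightarrow> real) lam T x)"
  unfolding is_strat2_def is_distr_def tbr_def by (simp add: sum.delta')

lemma br_feasible:
  fixes M :: "'k::finite \<Rightarrow> 'l::finite \<Rightarrow> 'a::finite \<Rightarrow> 'b::finite \<Rightarrow> real"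
  assumes x: "in_X T p x"
  shows "lp1_feasible M lam T p x (u0br M lam T x) (UBf M lam T x)"
  unfolding lp1_feasible_def
proof (intro conjI allI impI)
  show "in_X T p x" by (rule x)
next
  fix l and h :: "'a list" and h' :: "'b list" and a b
  assume "length h = T - 1 \<and> length h' = T - 1"
  then show "UBf M lam T x l h h' a b = 0" by (simp add: UBf_term)
next
  fix l b'
  show "lam * (\<Sum>k\<in>UNIV. \<Sum>a'\<in>UNIV. M k l a' b' * x k [] [] a') + (1 - lam) * (\<Sum>a'\<in>UNIV. UBf M lam T x l [] [] a' b') \<ge> u0br M lam T x l"
    using Min_range_le[of "Rv M lam x (UBf M lam T x) l [] []" b'] unfolding u0br_def Rv_def .
next
  fix l and h :: "'a list" and h' :: "'b list" and a b b'
  assume h: "is_hist (T - 1) h h'"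
  show "lam * (\<Sum>k\<in>UNIV. \<Sum>a'\<in>UNIV. M k l a' b' * x k (h @ [a]) (h' @ [b]) a') + (1 - lam) * (\<Sum>a'\<in>UNIV. UBf M lam T x l (h @ [a]) (h' @ [b]) a' b')
       \<ge> UBf M lam T x l h h' a b"
    using Min_range_le[of "Rv M lam x (UBf M lam T x) l (h @ [a]) (h' @ [b])" b'] unfolding UBf_step[OF h] Rv_def .
qed

lemma sum_ind_eq: "(\<Sum>b'\<in>(UNIV::'b::finite set). c * (if b' = \<beta> then 1 else 0) * R b') = c * (R \<beta> :: real)"
proof -
  have "(\<Sum>b'\<in>(UNIV::'b set). c * (if b' = \<beta> then 1 else 0) * R b') = (\<Sum>b'\<in>UNIV. if b' = \<beta> then c * R b' else 0)"
    by (rule sum.cong) auto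
  then show ?thesis by simp
qed

lemma br_exact:
  fixes M :: "'k::finite \<Rightarrow> 'l::finite \<Rightarrow> 'a::finite \<Rightarrow> 'b::finite \<Rightarrow> real"
  assumes x: "in_X T p x" and T: "0 < T" and lam: "lam \<le> 1"
  shows "u0br M lam T x l = (\<Sum>k\<in>UNIV. p k * cond_payoff M lam T (strat_of_plan1 x) (tbr M lam T x) k l)"
proof -
  let ?t = "tbr M lam T x"
  let ?R = "Rv M lam x (UBf M lam T x) l"
  have "u0br M lam T x l = (\<Sum>t<T. lam * (1 - lam) ^ t * Ey M x l (\<lambda>h h' b. rp2 ?t l h h' b) t)"
  proof (rule lp1_exact[OF T lam])
    show "\<And>h h' a b. length h = T - 1 \<Longrightarrow> length h' = T - 1 \<Longrightarrow> UBf M lam T x l h h' a b = 0"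
      by (simp add: UBf_term)
    have "(\<Sum>b'\<in>UNIV. rp2 ?t l [] [] b' * ?R [] [] b') = (\<Sum>b'\<in>UNIV. 1 * (if b' = brb M lam T x l [] [] then 1 else 0) * ?R [] [] b')"
      by (rule sum.cong) (auto simp: rp2_def tbr_def)
    also have "\<dots> = u0br M lam T x l" unfolding sum_ind_eq brb_min u0br_def by simp
    finally show "(\<Sum>b'\<in>UNIV. rp2 ?t l [] [] b' * ?R [] [] b') = u0br M lam T x l" .
  next
    fix h :: "'a list" and h' :: "'b list" and a b assume h: "is_hist (T - 1) h h'"
    then have hl: "length h = length h'" by (simp add: is_hist_def)
    have "(\<Sum>b'\<in>UNIV. rp2 ?t l (h @ [a]) (h' @ [b]) b' * ?R (h @ [a]) (h' @ [b]) b') =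
      (\<Sum>b'\<in>UNIV. rp2 ?t l h h' b * (if b' = brb M lam T x l (h @ [a]) (h' @ [b]) then 1 else 0) * ?R (h @ [a]) (h' @ [b]) b')"
      by (rule sum.cong) (auto simp: rp2_def pr2_snoc[OF hl] tbr_def)
    also have "\<dots> = rp2 ?t l h h' b * UBf M lam T x l h h' a b"
      unfolding sum_ind_eq brb_min UBf_step[OF h] ..
    finally show "(\<Sum>b'\<in>UNIV. rp2 ?t l (h @ [a]) (h' @ [b]) b' * ?R (h @ [a]) (h' @ [b]) b') = rp2 ?t l h h' b * UBf M lam T x l h h' a b" .
  qed
  also have "\<dots> = (\<Sum>k\<in>UNIV. p k * cond_payoff M lam T (strat_of_plan1 x) ?t k l)"
    by (rule payl_Ey[symmetric, OF x tbr_strat])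
  finally show ?thesis .
qed

lemma value_unique:
  assumes "is_value M lam T p q v1" "is_value M lam T p q v2"
  shows "v1 = v2"
proof -
  obtain \<sigma>1 \<tau>1 where 1: "is_strat1 T \<sigma>1" "\<forall>\<tau>. is_strat2 T \<tau> \<longrightarrow> payoff M lam T p q \<sigma>1 \<tau> \<ge> v1"
    "is_strat2 T \<tau>1" "\<forall>\<sigma>. is_strat1 T \<sigma> \<longrightarrow> payoff M lam T p q \<sigma> \<tau>1 \<le> v1"
    using assms(1) unfolding is_value_def by blast
  obtain \<sigma>2 \<tau>2 where 2: "is_strat1 T \<sigma>2" "\<forall>\<tau>. is_strat2 T \<tau> \<longrightarrow> payoff M lam T p q \<sigma>2 \<tau> \<ge> v2"
    "is_strat2 T \<tau>2" "\<forall>\<sigma>. is_strat1 T \<sigma> \<longrightarrow> payoff M lam T p q \<sigma> \<tau>2 \<le> v2"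
    using assms(2) unfolding is_value_def by blast
  have "v1 \<le> v2" using 1(2) 2(4) 1(1) 2(3) by (meson order.trans)
  moreover have "v2 \<le> v1" using 2(2) 1(4) 2(1) 1(3) by (meson order.trans)
  ultimately show ?thesis by simp
qed

lemma game_value_is:
  assumes "is_value M lam T p q v"
  shows "game_value M lam T p q = v"
  unfolding game_value_def using assms value_unique by blast

lemma payoff_l:
  "payoff M lam T p q \<sigma> \<tau> = (\<Sum>l\<in>UNIV. q l * (\<Sum>k\<in>UNIV. p k * cond_payoff M lam T \<sigma> \<tau> k l))"
  unfolding payoff_def by (subst sum.swap) (simp add: sum_distrib_left mult_ac)

lemma payoff_plan_eq:
  fixes \<sigma>1 \<sigma>2 :: "('k::finite,'a::finite,'b::finite) strat1" and \<tau> :: "('l::finite,'a,'b) strat2"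
  assumes s1: "is_strat1 T \<sigma>1" and s2: "is_strat1 T \<sigma>2" and t: "is_strat2 T \<tau>"
    and eq: "\<And>k h h' a. is_hist T h h' \<Longrightarrow> real_plan1 p \<sigma>1 k h h' a = real_plan1 p \<sigma>2 k h h' a"
  shows "payoff M lam T p q \<sigma>1 \<tau> = payoff M lam T p q \<sigma>2 \<tau>"
proof -
  define x where "x = (\<lambda>(s::nat, h::'a list, h'::'b list, k::'k, a::'a). real_plan1 p \<sigma>1 k h h' a)"
  define y where "y = (\<lambda>(s::nat, g'::'b list, g::'a list, l::'l, b::'b). real_plan2 q \<tau> l g g' b)"
  have "bil (I1 T) (I1 T) (Cg lam M) x y = payoff M lam T p q \<sigma>1 \<tau>"
    by (rule bil_payoff[OF s1 t]) (simp_all add: x_def y_def)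
  moreover have "bil (I1 T) (I1 T) (Cg lam M) x y = payoff M lam T p q \<sigma>2 \<tau>"
    by (rule bil_payoff[OF s2 t]) (simp_all add: x_def y_def eq is_hist_def)
  ultimately show ?thesis by simp
qed

lemma sum_pos_eq:
  fixes a b q :: "'l::finite \<Rightarrow> real"
  assumes "\<forall>l. q l > 0" "\<And>l. b l \<le> a l" "(\<Sum>l\<in>UNIV. q l * a l) \<le> (\<Sum>l\<in>UNIV. q l * b l)"
  shows "a l = b l"
proof -
  have "(\<Sum>l\<in>UNIV. q l * (a l - b l)) \<le> 0" using assms(3) by (simp add: algebra_simps sum_subtractf)
  moreover have nn: "\<forall>l\<in>UNIV. 0 \<le> q l * (a l - b l)" using assms(1,2) by (simp add: less_imp_le)
  ultimately have "(\<Sum>l\<in>UNIV. q l * (a l - b l)) = 0" by (simp add: antisym sum_nonneg)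
  then have "q l * (a l - b l) = 0" using nn by (simp add: sum_nonneg_eq_0_iff)
  then show ?thesis using assms(1) by (metis eq_iff_diff_eq_0 mult_eq_0_iff order_less_irrefl)
qed

lemma half1:
  fixes M :: "'k::finite \<Rightarrow> 'l::finite \<Rightarrow> 'a::finite \<Rightarrow> 'b::finite \<Rightarrow> real"
    and lam :: real and T :: nat and p :: "'k \<Rightarrow> real" and q :: "'l \<Rightarrow> real"
  assumes lam0: "0 < lam" and lam1: "lam < 1" and T1: "T \<ge> 1"
    and pp: "\<forall>k. p k > 0" and ps: "(\<Sum>k\<in>UNIV. p k) = 1"
    and qp: "\<forall>l. q l > 0" and qs: "(\<Sum>l\<in>UNIV. q l) = 1"
  shows
    "(\<exists>x u0 U. lp1_feasible M lam T p x u0 U \<and>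
        (\<Sum>l\<in>UNIV. q l * u0 l) = game_value M lam T p q) \<and>
     (\<forall>x u0 U. lp1_feasible M lam T p x u0 U \<longrightarrow>
        (\<Sum>l\<in>UNIV. q l * u0 l) \<le> game_value M lam T p q) \<and>
     (\<forall>x u0 U. lp1_optimal M lam T p q x u0 U \<longrightarrow>
        optimal_plan1 M lam T p q x \<and> (\<forall>l. sec_u M lam T p x l = u0 l))"
proof -
  have T: "0 < T" using T1 by simp
  have lam: "lam \<le> 1" using lam1 by simp
  have p0: "\<forall>k. 0 \<le> p k" using pp by (simp add: less_imp_le)
  have q0: "\<forall>l. 0 \<le> q l" using qp by (simp add: less_imp_le)
  obtain v \<sigma>s \<tau>s where vst: "is_strat1 T \<sigma>s" "is_strat2 T \<tau>s"
    "\<forall>\<tau>'. is_strat2 T \<tau>' \<longrightarrow> v \<le> payoff M lam T p q \<sigma>s \<tau>'"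
    "\<forall>\<sigma>'. is_strat1 T \<sigma>' \<longrightarrow> payoff M lam T p q \<sigma>' \<tau>s \<le> v"
    using value_exists[OF T p0 q0, of M lam] by blast
  have gv: "game_value M lam T p q = v"
    by (rule game_value_is) (use vst in \<open>auto simp: is_value_def\<close>)
  define pl where "pl x \<tau> l = (\<Sum>k\<in>UNIV. p k * cond_payoff M lam T (strat_of_plan1 x) \<tau> k l)" for x \<tau> l
  have payl: "payoff M lam T p q (strat_of_plan1 x) \<tau> = (\<Sum>l\<in>UNIV. q l * pl x \<tau> l)" for x \<tau>
    unfolding pl_def by (rule payoff_l)
  have LB: "u0 l \<le> pl x \<tau> l" if F: "lp1_feasible M lam T p x u0 U" and t: "is_strat2 T \<tau>" for x u0 U \<tau> l
  proof -
    have x: "in_X T p x" using F by (simp add: lp1_feasible_def)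
    have "u0 l \<le> (\<Sum>t<T. lam * (1 - lam) ^ t * Ey M x l (\<lambda>h h' b. rp2 \<tau> l h h' b) t)"
      by (rule lp1_lower[OF F T lam]) (use rp2_props[OF t T] in auto)
    then show ?thesis unfolding pl_def payl_Ey[OF x t] .
  qed
  have P2: "(\<Sum>l\<in>UNIV. q l * u0 l) \<le> v" if F: "lp1_feasible M lam T p x u0 U" for x u0 U
  proof -
    have x: "in_X T p x" using F by (simp add: lp1_feasible_def)
    have "(\<Sum>l\<in>UNIV. q l * u0 l) \<le> (\<Sum>l\<in>UNIV. q l * pl x \<tau>s l)"
      using LB[OF F vst(2)] q0 by (intro sum_mono mult_left_mono) auto
    also have "\<dots> = payoff M lam T p q (strat_of_plan1 x) \<tau>s" by (rule payl[symmetric])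
    also have "\<dots> \<le> v" using vst(4) sop1_strat[OF x] by blast
    finally show ?thesis .
  qed
  define xs where "xs = real_plan1 p \<sigma>s"
  have xs: "in_X T p xs" unfolding xs_def by (rule strat_plan1[OF vst(1) p0 T])
  have Fs: "lp1_feasible M lam T p xs (u0br M lam T xs) (UBf M lam T xs)" by (rule br_feasible[OF xs])
  have Vs: "(\<Sum>l\<in>UNIV. q l * u0br M lam T xs l) = v"
  proof (rule antisym)
    show "(\<Sum>l\<in>UNIV. q l * u0br M lam T xs l) \<le> v" by (rule P2[OF Fs])
    have "(\<Sum>l\<in>UNIV. q l * u0br M lam T xs l) = payoff M lam T p q (strat_of_plan1 xs) (tbr M lam T xs)"
      unfolding payl pl_def by (rule sum.cong[OF refl]) (simp add: br_exact[OF xs T lam, where M=M])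
    also have "\<dots> = payoff M lam T p q \<sigma>s (tbr M lam T xs)"
      by (rule payoff_plan_eq[OF sop1_strat[OF xs] vst(1) tbr_strat]) (use sop1_plan[OF xs] in \<open>simp add: xs_def\<close>)
    finally show "v \<le> (\<Sum>l\<in>UNIV. q l * u0br M lam T xs l)" using vst(3) tbr_strat by metis
  qed
  have part3: "optimal_plan1 M lam T p q x \<and> (\<forall>l. sec_u M lam T p x l = u0 l)"
    if O: "lp1_optimal M lam T p q x u0 U" for x u0 U
  proof -
    have F: "lp1_feasible M lam T p x u0 U" using O by (simp add: lp1_optimal_def)
    have x: "in_X T p x" using F by (simp add: lp1_feasible_def)
    have V: "(\<Sum>l\<in>UNIV. q l * u0 l) = v"
    proof (rule antisym)
      show "(\<Sum>l\<in>UNIV. q l * u0 l) \<le> v" by (rule P2[OF F])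
      show "v \<le> (\<Sum>l\<in>UNIV. q l * u0 l)" using O Fs Vs unfolding lp1_optimal_def by metis
    qed
    let ?\<sigma> = "strat_of_plan1 x"
    have s: "is_strat1 T ?\<sigma>" by (rule sop1_strat[OF x])
    have sec: "security1 M lam T p q ?\<sigma>"
      unfolding security1_def gv
    proof (intro conjI allI impI s)
      fix \<tau> :: "('l,'a,'b) strat2" assume t: "is_strat2 T \<tau>"
      have "v = (\<Sum>l\<in>UNIV. q l * u0 l)" using V by simp
      also have "\<dots> \<le> (\<Sum>l\<in>UNIV. q l * pl x \<tau> l)"
        using LB[OF F t] q0 by (intro sum_mono mult_left_mono) auto
      also have "\<dots> = payoff M lam T p q ?\<sigma> \<tau>" by (rule payl[symmetric])
      finally show "v \<le> payoff M lam T p q ?\<sigma> \<tau>" .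
    qed
    have op: "optimal_plan1 M lam T p q x"
      unfolding optimal_plan1_def using sec sop1_plan[OF x] by metis
    have nemp: "{\<tau>::('l,'a,'b) strat2. is_strat2 T \<tau>} \<noteq> {}" using unif2_strat by blast
    have secl: "u0 l \<le> sec_u M lam T p x l" for l
      unfolding sec_u_def by (rule cINF_greatest[OF nemp]) (use LB[OF F] in \<open>auto simp: pl_def\<close>)
    have bdd: "bdd_below ((\<lambda>\<tau>. \<Sum>k\<in>UNIV. p k * cond_payoff M lam T (strat_of_plan1 x) \<tau> k l) ` {\<tau>. is_strat2 T \<tau>})" for l
      by (rule bdd_belowI[where m="u0 l"]) (use LB[OF F] in \<open>auto simp: pl_def\<close>)
    have secu: "sec_u M lam T p x l \<le> pl x \<tau>s l" for l
      unfolding sec_u_def pl_def by (rule cINF_lower[OF bdd]) (use vst(2) in auto)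
    have "(\<Sum>l\<in>UNIV. q l * sec_u M lam T p x l) \<le> (\<Sum>l\<in>UNIV. q l * pl x \<tau>s l)"
      using secu q0 by (intro sum_mono mult_left_mono) auto
    also have "\<dots> = payoff M lam T p q ?\<sigma> \<tau>s" by (rule payl[symmetric])
    also have "\<dots> \<le> v" using vst(4) s by blast
    also have "\<dots> = (\<Sum>l\<in>UNIV. q l * u0 l)" using V by simp
    finally have H: "(\<Sum>l\<in>UNIV. q l * sec_u M lam T p x l) \<le> (\<Sum>l\<in>UNIV. q l * u0 l)" .
    have "sec_u M lam T p x l = u0 l" for l
      by (rule sum_pos_eq[where q=q and a="sec_u M lam T p x" and b=u0, OF qp secl H])
    then have "\<forall>l. sec_u M lam T p x l = u0 l" by blast
    then show ?thesis using op by simp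
  qed
  have A: "\<exists>x u0 U. lp1_feasible M lam T p x u0 U \<and> (\<Sum>l\<in>UNIV. q l * u0 l) = game_value M lam T p q"
    using Fs Vs gv by metis
  have B: "\<forall>x u0 U. lp1_feasible M lam T p x u0 U \<longrightarrow> (\<Sum>l\<in>UNIV. q l * u0 l) \<le> game_value M lam T p q"
    using P2 gv by metis
  show ?thesis using A B part3 by blast
qed

definition swW :: "('k \<Rightarrow> 'a list \<Rightarrow> 'b list \<Rightarrow> 'a \<Rightarrow> 'b \<Rightarrow> real) \<Rightarrow> 'k \<Rightarrow> 'b list \<Rightarrow> 'a list \<Rightarrow> 'b \<Rightarrow> 'a \<Rightarrow> real" where
  "swW W k hb ha b a = - W k ha hb a b"

lemma swW_swW[simp]: "swW (swW W) = W" by (simp add: swW_def fun_eq_iff)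

lemma T2_pt:
  fixes M :: "'k::finite \<Rightarrow> 'l::finite \<Rightarrow> 'a::finite \<Rightarrow> 'b::finite \<Rightarrow> real"
  shows "lam * (\<Sum>l\<in>UNIV. \<Sum>b\<in>UNIV. negM M l k b a * swp y l hb ha b) + (1 - lam) * (\<Sum>b\<in>UNIV. swW W k hb ha b a)
    = - (lam * (\<Sum>l\<in>UNIV. \<Sum>b\<in>UNIV. M k l a b * y l ha hb b) + (1 - lam) * (\<Sum>b\<in>UNIV. W k ha hb a b))"
  by (simp add: negM_def swW_def sum_negf algebra_simps)

lemma T2:
  fixes M :: "'k::finite \<Rightarrow> 'l::finite \<Rightarrow> 'a::finite \<Rightarrow> 'b::finite \<Rightarrow> real"
  shows "lp2_feasible M lam T q y w0 W \<longleftrightarrow> lp1_feasible (negM M) lam T q (swp y) (\<lambda>k. - w0 k) (swW W)"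
proof -
  have c1: "in_X T q (swp y) \<longleftrightarrow> in_Y T q y" by simp
  have c2: "(\<forall>k (ha::'a list) (hb::'b list) a b. length ha = T - 1 \<and> length hb = T - 1 \<longrightarrow> W k ha hb a b = 0) \<longleftrightarrow>
     (\<forall>k (ha::'b list) (hb::'a list) a b. length ha = T - 1 \<and> length hb = T - 1 \<longrightarrow> swW W k ha hb a b = 0)"
    unfolding swW_def by (metis neg_equal_0_iff_equal)
  have c3: "(\<forall>k a'. lam * (\<Sum>l\<in>UNIV. \<Sum>b'\<in>UNIV. M k l a' b' * y l [] [] b')
             + (1 - lam) * (\<Sum>b'\<in>UNIV. W k [] [] a' b') \<le> w0 k) \<longleftrightarrow>
     (\<forall>k a'. lam * (\<Sum>l\<in>UNIV. \<Sum>b'\<in>UNIV. negM M l k b' a' * swp y l [] [] b')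
             + (1 - lam) * (\<Sum>b'\<in>UNIV. swW W k [] [] b' a') \<ge> - w0 k)"
    by (simp only: T2_pt neg_le_iff_le)
  have c4: "(\<forall>k (ha::'a list) (hb::'b list) a b a'. is_hist (T - 1) ha hb \<longrightarrow>
        lam * (\<Sum>l\<in>UNIV. \<Sum>b'\<in>UNIV. M k l a' b' * y l (ha @ [a]) (hb @ [b]) b')
        + (1 - lam) * (\<Sum>b'\<in>UNIV. W k (ha @ [a]) (hb @ [b]) a' b') \<le> W k ha hb a b) \<longleftrightarrow>
     (\<forall>k (hb::'b list) (ha::'a list) b a a'. is_hist (T - 1) hb ha \<longrightarrow>
        lam * (\<Sum>l\<in>UNIV. \<Sum>b'\<in>UNIV. negM M l k b' a' * swp y l (hb @ [b]) (ha @ [a]) b')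
        + (1 - lam) * (\<Sum>b'\<in>UNIV. swW W k (hb @ [b]) (ha @ [a]) b' a') \<ge> swW W k hb ha b a)"
  proof -
    have e: "swW W k hb ha b a = - W k ha hb a b" for k ha hb a b by (simp add: swW_def)
    have h: "is_hist (T - 1) hb ha = is_hist (T - 1) ha hb" for ha :: "'a list" and hb :: "'b list"
      by (auto simp: is_hist_def)
    show ?thesis unfolding T2_pt unfolding e h neg_le_iff_le by blast
  qed
  show ?thesis
    unfolding lp1_feasible_def lp2_feasible_def c1 c2 c3 c4 by simp
qed

lemma is_value_neg:
  fixes M :: "'k::finite \<Rightarrow> 'l::finite \<Rightarrow> 'a::finite \<Rightarrow> 'b::finite \<Rightarrow> real"
  assumes "is_value M lam T p q v"
  shows "is_value (negM M) lam T q p (- v)"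
proof -
  obtain \<sigma> \<tau> where st: "is_strat1 T \<sigma>" "\<forall>\<tau>. is_strat2 T \<tau> \<longrightarrow> payoff M lam T p q \<sigma> \<tau> \<ge> v"
    "is_strat2 T \<tau>" "\<forall>\<sigma>. is_strat1 T \<sigma> \<longrightarrow> payoff M lam T p q \<sigma> \<tau> \<le> v"
    using assms unfolding is_value_def by blast
  have 1: "is_strat1 T (swp \<tau>)" using st(3) by simp
  have 2: "is_strat2 T (swp \<sigma>)" using st(1) by simp
  have 3: "payoff (negM M) lam T q p (swp \<tau>) \<tau>' \<ge> - v" if "is_strat2 T \<tau>'" for \<tau>' :: "('k,'b,'a) strat2"
  proof -
    have "payoff (negM M) lam T q p (swp \<tau>) \<tau>' = payoff (negM M) lam T q p (swp \<tau>) (swp (swp \<tau>'))" by simp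
    also have "\<dots> = - payoff M lam T p q (swp \<tau>') \<tau>" by (rule payoff_swp)
    finally show ?thesis using st(4) that by simp
  qed
  have 4: "payoff (negM M) lam T q p \<sigma>' (swp \<sigma>) \<le> - v" if "is_strat1 T \<sigma>'" for \<sigma>' :: "('l,'b,'a) strat1"
  proof -
    have "payoff (negM M) lam T q p \<sigma>' (swp \<sigma>) = payoff (negM M) lam T q p (swp (swp \<sigma>')) (swp \<sigma>)" by simp
    also have "\<dots> = - payoff M lam T p q \<sigma> (swp \<sigma>')" by (rule payoff_swp)
    finally show ?thesis using st(2) that by simp
  qed
  show ?thesis unfolding is_value_def using 1 2 3 4 by blast
qed

lemma gv_neg:
  fixes M :: "'k::finite \<Rightarrow> 'l::finite \<Rightarrow> 'a::finite \<Rightarrow> 'b::finite \<Rightarrow> real"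
  assumes T: "0 < T" and p: "\<forall>k. 0 \<le> p k" and q: "\<forall>l. 0 \<le> q l"
  shows "game_value (negM M) lam T q p = - game_value M lam T p q"
proof -
  obtain v where v: "is_value M lam T p q v"
    using value_exists[OF T p q, of M lam] unfolding is_value_def by blast
  show ?thesis using game_value_is[OF v] game_value_is[OF is_value_neg[OF v]] by simp
qed

lemma T4:
  fixes M :: "'k::finite \<Rightarrow> 'l::finite \<Rightarrow> 'a::finite \<Rightarrow> 'b::finite \<Rightarrow> real"
  assumes T: "0 < T" and p: "\<forall>k. 0 \<le> p k" and q: "\<forall>l. 0 \<le> q l"
    and O: "optimal_plan1 (negM M) lam T q p (swp y)"
  shows "optimal_plan2 M lam T p q y"
proof -
  obtain \<sigma>' where s: "security1 (negM M) lam T q p \<sigma>'"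
    and pl: "\<And>k ha hb a. is_hist T ha hb \<Longrightarrow> swp y k ha hb a = real_plan1 q \<sigma>' k ha hb a"
    using O unfolding optimal_plan1_def by blast
  define \<tau> where "\<tau> = swp \<sigma>'"
  have st: "is_strat2 T \<tau>" using s unfolding security1_def \<tau>_def by simp
  have sec: "security2 M lam T p q \<tau>"
    unfolding security2_def
  proof (intro conjI allI impI st)
    fix \<sigma> :: "('k,'a,'b) strat1" assume "is_strat1 T \<sigma>"
    then have "is_strat2 T (swp \<sigma>)" by simp
    then have "payoff (negM M) lam T q p \<sigma>' (swp \<sigma>) \<ge> game_value (negM M) lam T q p"
      using s unfolding security1_def by blast
    moreover have "payoff (negM M) lam T q p \<sigma>' (swp \<sigma>) = - payoff M lam T p q \<sigma> \<tau>"
      unfolding \<tau>_def using payoff_swp[of M lam T q p "swp \<sigma>'" \<sigma>] by simp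
    ultimately show "payoff M lam T p q \<sigma> \<tau> \<le> game_value M lam T p q"
      using gv_neg[OF T p q, of M lam] by simp
  qed
  have "y l ha hb b = real_plan2 q \<tau> l ha hb b" if "is_hist T ha hb" for l ha hb b
  proof -
    have "is_hist T hb ha" using that by (auto simp: is_hist_def)
    then have "swp y l hb ha b = real_plan1 q \<sigma>' l hb ha b" by (rule pl)
    then show ?thesis unfolding \<tau>_def rp2_swp by simp
  qed
  then show ?thesis unfolding optimal_plan2_def using sec by blast
qed

lemma T5:
  fixes M :: "'k::finite \<Rightarrow> 'l::finite \<Rightarrow> 'a::finite \<Rightarrow> 'b::finite \<Rightarrow> real"
  shows "sec_w M lam T q y k = - sec_u (negM M) lam T q (swp y) k"
proof -
  define F where "F \<sigma> = (\<Sum>l\<in>UNIV. q l * cond_payoff M lam T \<sigma> (strat_of_plan2 y) k l)" for \<sigma>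
  have S: "swp ` {\<tau>'::('k,'b,'a) strat2. is_strat2 T \<tau>'} = {\<sigma>::('k,'a,'b) strat1. is_strat1 T \<sigma>}"
  proof
    show "swp ` {\<tau>'::('k,'b,'a) strat2. is_strat2 T \<tau>'} \<subseteq> {\<sigma>. is_strat1 T \<sigma>}" by auto
    show "{\<sigma>::('k,'a,'b) strat1. is_strat1 T \<sigma>} \<subseteq> swp ` {\<tau>'. is_strat2 T \<tau>'}"
    proof
      fix \<sigma> :: "('k,'a,'b) strat1" assume "\<sigma> \<in> {\<sigma>. is_strat1 T \<sigma>}"
      then show "\<sigma> \<in> swp ` {\<tau>'. is_strat2 T \<tau>'}" by (intro image_eqI[of _ _ "swp \<sigma>"]) auto
    qed
  qed
  have c: "(\<Sum>l\<in>UNIV. q l * cond_payoff (negM M) lam T (strat_of_plan1 (swp y)) \<tau>' l k) = - F (swp \<tau>')"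
    for \<tau>' :: "('k,'b,'a) strat2"
  proof -
    have "cond_payoff (negM M) lam T (strat_of_plan1 (swp y)) \<tau>' l k =
        cond_payoff (negM M) lam T (swp (strat_of_plan2 y)) (swp (swp \<tau>')) l k" for l
      by (simp add: sop1_swp)
    then show ?thesis unfolding F_def cond_payoff_swp by (simp add: sum_negf)
  qed
  have "sec_u (negM M) lam T q (swp y) k = Inf ((\<lambda>\<tau>'. - F (swp \<tau>')) ` {\<tau>'::('k,'b,'a) strat2. is_strat2 T \<tau>'})"
    unfolding sec_u_def c ..
  also have "\<dots> = - Sup ((\<lambda>\<tau>'. F (swp \<tau>')) ` {\<tau>'::('k,'b,'a) strat2. is_strat2 T \<tau>'})"
    unfolding Inf_real_def image_image by simp
  also have "(\<lambda>\<tau>'. F (swp \<tau>')) ` {\<tau>'::('k,'b,'a) strat2. is_strat2 T \<tau>'} = F ` {\<sigma>. is_strat1 T \<sigma>}"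
    unfolding S[symmetric] image_image ..
  also have "Sup (F ` {\<sigma>. is_strat1 T \<sigma>}) = sec_w M lam T q y k"
    unfolding sec_w_def F_def ..
  finally have X: "sec_u (negM M) lam T q (swp y) k = - sec_w M lam T q y k" .
  show ?thesis using X by linarith
qed

lemma T3:
  fixes M :: "'k::finite \<Rightarrow> 'l::finite \<Rightarrow> 'a::finite \<Rightarrow> 'b::finite \<Rightarrow> real"
  assumes O: "lp2_optimal M lam T p q y w0 W"
  shows "lp1_optimal (negM M) lam T q p (swp y) (\<lambda>k. - w0 k) (swW W)"
  unfolding lp1_optimal_def
proof (intro conjI allI impI)
  show "lp1_feasible (negM M) lam T q (swp y) (\<lambda>k. - w0 k) (swW W)"
    using O unfolding lp2_optimal_def T2 by blast
next
  fix x' u0' U' assume F: "lp1_feasible (negM M) lam T q x' u0' U'"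
  have "lp2_feasible M lam T q (swp x') (\<lambda>k. - u0' k) (swW U')"
    unfolding T2 using F by simp
  then have "(\<Sum>k\<in>UNIV. p k * w0 k) \<le> (\<Sum>k\<in>UNIV. p k * - u0' k)"
    using O unfolding lp2_optimal_def by blast
  then show "(\<Sum>k\<in>UNIV. p k * u0' k) \<le> (\<Sum>k\<in>UNIV. p k * - w0 k)"
    by (simp add: sum_negf)
qed

theorem theorem3:
  fixes M :: "'k::finite \<Rightarrow> 'l::finite \<Rightarrow> 'a::finite \<Rightarrow> 'b::finite \<Rightarrow> real"
    and lam :: real and T :: nat and p :: "'k \<Rightarrow> real" and q :: "'l \<Rightarrow> real"
  assumes "0 < lam" "lam < 1" "T \<ge> 1"
    and "\<forall>k. p k > 0" "(\<Sum>k\<in>UNIV. p k) = 1"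
    and "\<forall>l. q l > 0" "(\<Sum>l\<in>UNIV. q l) = 1"
  shows
    "(\<exists>x u0 U. lp1_feasible M lam T p x u0 U \<and>
        (\<Sum>l\<in>UNIV. q l * u0 l) = game_value M lam T p q) \<and>
     (\<forall>x u0 U. lp1_feasible M lam T p x u0 U \<longrightarrow>
        (\<Sum>l\<in>UNIV. q l * u0 l) \<le> game_value M lam T p q) \<and>
     (\<forall>x u0 U. lp1_optimal M lam T p q x u0 U \<longrightarrow>
        optimal_plan1 M lam T p q x \<and> (\<forall>l. sec_u M lam T p x l = u0 l)) \<and>
     (\<exists>y w0 W. lp2_feasible M lam T q y w0 W \<and>
        (\<Sum>k\<in>UNIV. p k * w0 k) = game_value M lam T p q) \<and>
     (\<forall>y w0 W. lp2_feasible M lam T q y w0 W \<longrightarrow>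
        (\<Sum>k\<in>UNIV. p k * w0 k) \<ge> game_value M lam T p q) \<and>
     (\<forall>y w0 W. lp2_optimal M lam T p q y w0 W \<longrightarrow>
        optimal_plan2 M lam T p q y \<and> (\<forall>k. sec_w M lam T q y k = w0 k))"
proof -
  note A = assms
  have T: "0 < T" using A(3) by simp
  have p0: "\<forall>k. 0 \<le> p k" using A(4) by (simp add: less_imp_le)
  have q0: "\<forall>l. 0 \<le> q l" using A(6) by (simp add: less_imp_le)
  note H1 = half1[OF A]
  note H2 = half1[where M="negM M" and p=q and q=p, OF A(1,2,3,6,7,4,5)]
  have gv: "game_value (negM M) lam T q p = - game_value M lam T p q" by (rule gv_neg[OF T p0 q0])
  have P4: "\<exists>y w0 W. lp2_feasible M lam T q y w0 W \<and> (\<Sum>k\<in>UNIV. p k * w0 k) = game_value M lam T p q"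
  proof -
    obtain x u0 U where xu: "lp1_feasible (negM M) lam T q x u0 U" "(\<Sum>k\<in>UNIV. p k * u0 k) = game_value (negM M) lam T q p"
      using H2 by blast
    have "lp2_feasible M lam T q (swp x) (\<lambda>k. - u0 k) (swW U)"
      unfolding T2 using xu(1) by simp
    moreover have "(\<Sum>k\<in>UNIV. p k * - u0 k) = game_value M lam T p q"
      using xu(2) gv by (simp add: sum_negf)
    ultimately show ?thesis by blast
  qed
  have P5: "\<forall>y w0 W. lp2_feasible M lam T q y w0 W \<longrightarrow> (\<Sum>k\<in>UNIV. p k * w0 k) \<ge> game_value M lam T p q"
  proof (intro allI impI)
    fix y w0 W assume "lp2_feasible M lam T q y w0 W"
    then have "lp1_feasible (negM M) lam T q (swp y) (\<lambda>k. - w0 k) (swW W)" unfolding T2 .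
    then have "(\<Sum>k\<in>UNIV. p k * - w0 k) \<le> game_value (negM M) lam T q p" using H2 by blast
    then show "(\<Sum>k\<in>UNIV. p k * w0 k) \<ge> game_value M lam T p q" using gv by (simp add: sum_negf)
  qed
  have P6: "\<forall>y w0 W. lp2_optimal M lam T p q y w0 W \<longrightarrow>
        optimal_plan2 M lam T p q y \<and> (\<forall>k. sec_w M lam T q y k = w0 k)"
  proof (intro allI impI)
    fix y w0 W assume "lp2_optimal M lam T p q y w0 W"
    then have O: "lp1_optimal (negM M) lam T q p (swp y) (\<lambda>k. - w0 k) (swW W)" by (rule T3)
    then have o1: "optimal_plan1 (negM M) lam T q p (swp y)" and o2: "\<forall>k. sec_u (negM M) lam T q (swp y) k = - w0 k"
      using H2 by blast+
    have "optimal_plan2 M lam T p q y" by (rule T4[OF T p0 q0 o1])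
    moreover have "\<forall>k. sec_w M lam T q y k = w0 k" using o2 by (simp add: T5)
    ultimately show "optimal_plan2 M lam T p q y \<and> (\<forall>k. sec_w M lam T q y k = w0 k)" by blast
  qed
  show ?thesis using H1 P4 P5 P6 by blast
qed

end
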